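(* Under the standing assumptions below, if $u\in\overline{\mathcal P_1}$ then $u$ does not belong to any periodic orbit, and no trajectory $(z(t))_{t\ge0}$ with $z(0)=u$ is eventually periodic.
   Context: Fix $\rho_1,\rho_2,\rho_3\in(0,1)$ with $\rho_1+\rho_2+\rho_3>1$ and $\rho_i+\rho_j\le1$ for all $i\ne j$; $\mu_i=1$, $\theta:=\rho_1+\rho_2+\rho_3-1$. $A_i^0:=\{y\in\mathbb R^3: y_1+y_2+y_3=1, y_i=0, y_l\ge0\}$, $A^0:=\bigcup_iA_i^0$; for $z\in A^0\setminus A_j^0$, $f_j(z):=\sum_{i\neq j}\frac{(1-\rho_j)z_i+\rho_i z_j}{(1-\rho_j)+\theta z_j}e_i$. For $(\hat i,\hat j,\hat k)$ equal to $(1,2,3)$ or a cyclic permutation, $(1-x)e_{\hat j}+xe_{\hat k}\in A^0_{\hat i}$ is written $(x,\hat i)$, $\mathrm{Side}((x,\hat i)):=\hat i$. Decision points $d_1,d_2,d_3\in(0,1)$ (identified with $(d_{\hat i},\hat i)$); switching rule $\mathfrak R((x,\hat i))=\hat j$ if $x<d_{\hat i}$, $\hat k$ if $x>d_{\hat i}$, both allowed if $x=d_{\hat i}$; $\varphi(z):=f_{\mathfrak R(z)}(z)$. A trajectory is $(z(t))$ with $z(t+1)\in\varphi(z(t))$; it is eventually periodic if for some $m\ge1$ and $N$, $\mathrm{Side}(z(n+m))=\mathrm{Side}(z(n))$ for all $n\ge N$. A periodic orbit is $u_1,\dots,u_m$ with $u_{n+1}\in\varphi(u_n)$, $u_1\in\varphi(u_m)$.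 $z$ is a pre-image of $z'$ if some trajectory from $z$ has $z(t)=z'$ for some $t\ge1$. Standing assumption: $d_1$ has infinitely many distinct pre-images, while $d_2$ and $d_3$ have only finitely many. $\mathcal P_1$ is the set consisting of $d_1$ and all its pre-images, $\overline{\mathcal P_1}$ its closure. *)

theory Defs
  imports "HOL-Analysis.Analysis"
begin

text \<open>Points of R^3 are vectors of type real^3. The coordinate indices 1,2,3 are the
  three elements of the index type 3 (where 3 = 0); the cyclic permutations
  (1,2,3),(2,3,1),(3,1,2) are exactly the triples (i, i+1, i+2).\<close>

definition theta :: "(3 \<Rightarrow> real) \<Rightarrow> real" where
  "theta \<rho> = \<rho> 1 + \<rho> 2 + \<rho> 3 - 1"

definition A0side :: "3 \<Rightarrow> (real^3) set" where
  "A0side i = {y. y$1 + y$2 + y$3 = 1 \<and> y$i = 0 \<and> (\<forall>l. y$l \<ge> 0)}"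

definition A0 :: "(real^3) set" where
  "A0 = (\<Union>i. A0side i)"

text \<open>f_j, meaningful for z in A0 - A0side j.\<close>
definition fmap :: "(3 \<Rightarrow> real) \<Rightarrow> 3 \<Rightarrow> real^3 \<Rightarrow> real^3" where
  "fmap \<rho> j z = (\<Sum>i\<in>UNIV - {j}.
      (((1 - \<rho> j) * z$i + \<rho> i * z$j) / ((1 - \<rho> j) + theta \<rho> * z$j)) *\<^sub>R axis i 1)"

definition spt :: "real \<Rightarrow> 3 \<Rightarrow> real^3" where
  "spt x i = (1 - x) *\<^sub>R axis (i + 1) 1 + x *\<^sub>R axis (i + 2) 1"

definition Rule :: "(3 \<Rightarrow> real) \<Rightarrow> real^3 \<Rightarrow> 3 set" where
  "Rule d z = {j. \<exists>x i. 0 \<le> x \<and> x \<le> 1 \<and> z = spt x i \<and>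
      ((x < d i \<and> j = i + 1) \<or> (x > d i \<and> j = i + 2) \<or> (x = d i \<and> (j = i + 1 \<or> j = i + 2)))}"

definition phi :: "(3 \<Rightarrow> real) \<Rightarrow> (3 \<Rightarrow> real) \<Rightarrow> real^3 \<Rightarrow> (real^3) set" where
  "phi \<rho> d z = {fmap \<rho> j z | j. j \<in> Rule d z}"

definition trajectory :: "(3 \<Rightarrow> real) \<Rightarrow> (3 \<Rightarrow> real) \<Rightarrow> (nat \<Rightarrow> real^3) \<Rightarrow> bool" where
  "trajectory \<rho> d z \<longleftrightarrow> (\<forall>t. z (Suc t) \<in> phi \<rho> d (z t))"

text \<open>Side of a point: the set of sides containing it (a singleton except at vertices).\<close>
definition Sides :: "real^3 \<Rightarrow> 3 set" where
  "Sides z = {i. z \<in> A0side i}"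

definition eventually_periodic :: "(nat \<Rightarrow> real^3) \<Rightarrow> bool" where
  "eventually_periodic z \<longleftrightarrow>
     (\<exists>m N. m \<ge> 1 \<and> (\<forall>n\<ge>N. Sides (z (n + m)) = Sides (z n)))"

definition periodic_orbit :: "(3 \<Rightarrow> real) \<Rightarrow> (3 \<Rightarrow> real) \<Rightarrow> nat \<Rightarrow> (nat \<Rightarrow> real^3) \<Rightarrow> bool" where
  "periodic_orbit \<rho> d m u \<longleftrightarrow> m \<ge> 1 \<and> (\<forall>n<m. u ((n + 1) mod m) \<in> phi \<rho> d (u n))"

definition in_periodic_orbit :: "(3 \<Rightarrow> real) \<Rightarrow> (3 \<Rightarrow> real) \<Rightarrow> real^3 \<Rightarrow> bool" where
  "in_periodic_orbit \<rho> d v \<longleftrightarrow> (\<exists>m u k. periodic_orbit \<rho> d m u \<and> k < m \<and> u k = v)"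

definition preimages :: "(3 \<Rightarrow> real) \<Rightarrow> (3 \<Rightarrow> real) \<Rightarrow> real^3 \<Rightarrow> (real^3) set" where
  "preimages \<rho> d w = {v. \<exists>z t. trajectory \<rho> d z \<and> z 0 = v \<and> t \<ge> 1 \<and> z t = w}"

definition P1 :: "(3 \<Rightarrow> real) \<Rightarrow> (3 \<Rightarrow> real) \<Rightarrow> (real^3) set" where
  "P1 \<rho> d = insert (spt (d 1) 1) (preimages \<rho> d (spt (d 1) 1))"

end

theory Submission
  imports Defs
begin


lemma num3[simp]: "(4::3) = 1" "(5::3) = 2" "(6::3) = 3"
  by simp_all

lemma three_cases: "(i::3) = 1 \<or> i = 2 \<or> i = 3" using exhaust_3[of i] by auto

lemma plus12_ne: "(i::3) + 1 \<noteq> i + 2" "(i::3) \<noteq> i + 1" "(i::3) \<noteq> i + 2"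
  using three_cases[of i] by auto

lemma plus_cyc: "(i::3) + 1 + 2 = i" "(i::3) + 2 + 1 = i" "(i::3) + 2 + 2 = i + 1" "(i::3)+1+1 = i+2"
  using three_cases[of i] by auto

locale sys =
  fixes \<rho> d :: "3 \<Rightarrow> real"
  assumes rho_range: "\<forall>i. 0 < \<rho> i \<and> \<rho> i < 1"
    and rho_sum: "\<rho> 1 + \<rho> 2 + \<rho> 3 > 1"
    and rho_pair: "\<forall>i j. i \<noteq> j \<longrightarrow> \<rho> i + \<rho> j \<le> 1"
    and d_range: "\<forall>i. 0 < d i \<and> d i < 1"
begin

abbreviation "th \<equiv> theta \<rho>"

lemma th_pos: "th > 0" using rho_sum by (simp add: theta_def)

lemma rho_pos: "\<rho> i > 0" and rho_lt1: "\<rho> i < 1" using rho_range by auto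
lemma d_pos: "d i > 0" and d_lt1: "d i < 1" using d_range by auto

lemma rho_sum3: "\<rho> 1 + \<rho> 2 + \<rho> 3 = \<rho> i + \<rho> (i+1) + \<rho> (i+2)"
  using three_cases[of i] by auto

lemma th_eq: "th = \<rho> i + \<rho> (i+1) + \<rho> (i+2) - 1"
  using rho_sum3[of i] by (simp add: theta_def)

lemma pair1: "\<rho> i + \<rho> (i+1) \<le> 1" using rho_pair plus12_ne[of i] by metis
lemma pair2: "\<rho> i + \<rho> (i+2) \<le> 1" using rho_pair plus12_ne[of i] by metis
lemma pair3: "\<rho> (i+1) + \<rho> (i+2) \<le> 1" using rho_pair plus12_ne[of i] by metis

definition gm :: "3 \<Rightarrow> real \<Rightarrow> real" where
  "gm i x = \<rho> i * (1 - x) / (1 - \<rho> (i+1) + th * (1 - x))"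
definition gp :: "3 \<Rightarrow> real \<Rightarrow> real" where
  "gp i x = 1 - \<rho> i * x / (1 - \<rho> (i+2) + th * x)"

definition Gm :: "3 \<Rightarrow> 3 \<Rightarrow> real \<Rightarrow> real" where
  "Gm i j x = (if j = i + 1 then gm i x else gp i x)"
definition Dm :: "3 \<Rightarrow> 3 \<Rightarrow> real \<Rightarrow> bool" where
  "Dm i j x \<longleftrightarrow> (j = i + 1 \<and> x \<le> d i) \<or> (j = i + 2 \<and> d i \<le> x)"

fun st :: "3 \<times> real \<Rightarrow> 3 \<times> real \<Rightarrow> bool" where
  "st (i, x) (j, y) \<longleftrightarrow> 0 \<le> x \<and> x \<le> 1 \<and> Dm i j x \<and> y = Gm i j x"

lemma den_m_pos: "0 \<le> x \<Longrightarrow> x \<le> 1 \<Longrightarrow> 1 - \<rho> (i+1) + th * (1 - x) > 0"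
proof -
  assume "0 \<le> x" "x \<le> 1"
  then have "th * (1 - x) \<ge> 0" using th_pos by simp
  then show ?thesis using rho_lt1[of "i+1"] by linarith
qed
lemma den_p_pos: "0 \<le> x \<Longrightarrow> x \<le> 1 \<Longrightarrow> 1 - \<rho> (i+2) + th * x > 0"
proof -
  assume "0 \<le> x" "x \<le> 1"
  then have "th * x \<ge> 0" using th_pos by simp
  then show ?thesis using rho_lt1[of "i+2"] by linarith
qed

lemma gm_pos: "0 \<le> x \<Longrightarrow> x < 1 \<Longrightarrow> gm i x > 0"
  unfolding gm_def using den_m_pos[of x i] rho_pos[of i] by simp
lemma gm_lt1: "0 \<le> x \<Longrightarrow> x \<le> 1 \<Longrightarrow> gm i x < 1"
proof -
  assume x: "0 \<le> x" "x \<le> 1"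
  have D: "1 - \<rho> (i+1) + th * (1 - x) > 0" by (rule den_m_pos[OF x])
  have "\<rho> i * (1 - x) < 1 - \<rho> (i+1) + th * (1 - x)"
  proof -
    have "(\<rho> i - th) * (1 - x) \<le> max 0 (\<rho> i - th)"
      using x by (cases "\<rho> i - th \<ge> 0") (auto intro: mult_left_le mult_nonpos_nonneg)
    moreover have "\<rho> i - th < 1 - \<rho> (i+1)" using th_eq[of i] rho_pos[of "i+2"] by simp
    moreover have "0 < 1 - \<rho> (i+1)" using rho_lt1[of "i+1"] by simp
    ultimately show ?thesis by (simp add: algebra_simps)
  qed
  then show ?thesis unfolding gm_def using D by simp
qed

lemma gp_lt1: "0 < x \<Longrightarrow> x \<le> 1 \<Longrightarrow> gp i x < 1"
  unfolding gp_def using den_p_pos[of x i] rho_pos[of i] by simp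
lemma gp_pos: "0 \<le> x \<Longrightarrow> x \<le> 1 \<Longrightarrow> gp i x > 0"
proof -
  assume x: "0 \<le> x" "x \<le> 1"
  have D: "1 - \<rho> (i+2) + th * x > 0" by (rule den_p_pos[OF x])
  have "\<rho> i * x < 1 - \<rho> (i+2) + th * x"
  proof -
    have "(\<rho> i - th) * x \<le> max 0 (\<rho> i - th)"
      using x by (cases "\<rho> i - th \<ge> 0") (auto intro: mult_left_le mult_nonpos_nonneg)
    moreover have "\<rho> i - th < 1 - \<rho> (i+2)" using th_eq[of i] rho_pos[of "i+1"] by simp
    moreover have "0 < 1 - \<rho> (i+2)" using rho_lt1[of "i+2"] by simp
    ultimately show ?thesis by (simp add: algebra_simps)
  qed
  then show ?thesis unfolding gp_def using D by simp
qed

lemma gm_diff: "0 \<le> x \<Longrightarrow> x \<le> 1 \<Longrightarrow> 0 \<le> y \<Longrightarrow> y \<le> 1 \<Longrightarrow>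
  gm i x - gm i y = \<rho> i * (1 - \<rho> (i+1)) * (y - x) /
     ((1 - \<rho> (i+1) + th * (1 - x)) * (1 - \<rho> (i+1) + th * (1 - y)))"
  using den_m_pos[of x i] den_m_pos[of y i] unfolding gm_def
  by (simp add: field_simps)

lemma gp_diff: "0 \<le> x \<Longrightarrow> x \<le> 1 \<Longrightarrow> 0 \<le> y \<Longrightarrow> y \<le> 1 \<Longrightarrow>
  gp i x - gp i y = \<rho> i * (1 - \<rho> (i+2)) * (y - x) /
     ((1 - \<rho> (i+2) + th * x) * (1 - \<rho> (i+2) + th * y))"
  using den_p_pos[of x i] den_p_pos[of y i] unfolding gp_def
  by (simp add: field_simps)


lemma gm_strict: "0 \<le> x \<Longrightarrow> x < y \<Longrightarrow> y \<le> 1 \<Longrightarrow> gm i y < gm i x"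
proof -
  assume a: "0 \<le> x" "x < y" "y \<le> 1"
  have "gm i x - gm i y > 0"
    using gm_diff[of x y i] a den_m_pos[of x i] den_m_pos[of y i] rho_pos[of i] rho_lt1[of "i+1"]
    by simp
  then show ?thesis by simp
qed

lemma gp_strict: "0 \<le> x \<Longrightarrow> x < y \<Longrightarrow> y \<le> 1 \<Longrightarrow> gp i y < gp i x"
proof -
  assume a: "0 \<le> x" "x < y" "y \<le> 1"
  have "gp i x - gp i y > 0"
    using gp_diff[of x y i] a den_p_pos[of x i] den_p_pos[of y i] rho_pos[of i] rho_lt1[of "i+2"]
    by simp
  then show ?thesis by simp
qed

definition dl :: real where
  "dl = min (min (min (d 1) (1 - d 1)) (min (d 2) (1 - d 2))) (min (d 3) (1 - d 3))"

lemma dl_le: "dl \<le> d i" "dl \<le> 1 - d i"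
  using three_cases[of i] unfolding dl_def by auto
lemma dl_pos: "dl > 0"
  unfolding dl_def using d_pos d_lt1 by (simp add: min_def)

definition lam :: real where "lam = 1 / (1 + th * dl)"

lemma lam_pos: "lam > 0" and lam_lt1: "lam < 1"
proof -
  have "th * dl > 0" using th_pos dl_pos by simp
  then show "lam > 0" "lam < 1" unfolding lam_def by (simp_all add: field_simps)
qed

lemma frac_lam: "0 < c \<Longrightarrow> c \<le> 1 \<Longrightarrow> c \<le> A \<Longrightarrow> c + th * dl \<le> A \<Longrightarrow> c / A \<le> lam"
proof -
  assume c: "0 < c" "c \<le> 1" "c \<le> A" "c + th * dl \<le> A"
  have p: "th * dl > 0" using th_pos dl_pos by simp
  have "c / A \<le> c / (c + th * dl)" using c p by (intro divide_left_mono) auto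
  also have "\<dots> \<le> 1 / (1 + th * dl)"
  proof -
    have "c * (1 + th * dl) \<le> 1 * (c + th * dl)" using c p
      by (simp add: algebra_simps) (simp add: mult_left_le_one_le)
    then show ?thesis using c p by (simp add: divide_simps)
  qed
  finally show ?thesis unfolding lam_def .
qed

lemma gm_contr: "0 \<le> x \<Longrightarrow> x \<le> d i \<Longrightarrow> 0 \<le> y \<Longrightarrow> y \<le> d i \<Longrightarrow>
   \<bar>gm i x - gm i y\<bar> \<le> lam * \<bar>x - y\<bar>"
proof -
  assume a: "0 \<le> x" "x \<le> d i" "0 \<le> y" "y \<le> d i"
  have x1: "x \<le> 1" "y \<le> 1" using a d_lt1[of i] by auto
  define c where "c = 1 - \<rho> (i+1)"
  define A where "A = c + th * (1 - x)"
  define B where "B = c + th * (1 - y)"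
  have c: "0 < c" "c \<le> 1" using rho_lt1[of "i+1"] rho_pos[of "i+1"] unfolding c_def by auto
  have rc: "\<rho> i \<le> c" using pair1[of i] unfolding c_def by simp
  have tA: "th * (1 - x) \<ge> th * dl" using dl_le[of i] a th_pos by (intro mult_left_mono) auto
  have tB: "th * (1 - y) \<ge> 0" using x1 th_pos by simp
  have A: "c \<le> A" "c + th * dl \<le> A" using tA th_pos dl_pos unfolding A_def c_def
    by (auto simp: mult_nonneg_nonneg)
  have B: "c \<le> B" using tB unfolding B_def c_def by simp
  have Ap: "A > 0" "B > 0" using A B c by auto
  have eq: "\<bar>gm i x - gm i y\<bar> = (\<rho> i / B) * (c / A) * \<bar>x - y\<bar>"
    using gm_diff[OF a(1) x1(1) a(3) x1(2), of i] Ap rho_pos[of i] c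
    unfolding c_def[symmetric] A_def[symmetric] B_def[symmetric]
    by (simp add: abs_mult abs_divide abs_minus_commute)
  have f1: "\<rho> i / B \<le> 1" using rc B Ap by simp
  have f2: "c / A \<le> lam" using frac_lam[OF c A] .
  have "(\<rho> i / B) * (c / A) \<le> 1 * lam"
    using f1 f2 rho_pos[of i] Ap c by (intro mult_mono) auto
  then have "(\<rho> i / B) * (c / A) * \<bar>x - y\<bar> \<le> lam * \<bar>x - y\<bar>"
    by (intro mult_right_mono) auto
  then show ?thesis unfolding eq .
qed

lemma gp_contr: "d i \<le> x \<Longrightarrow> x \<le> 1 \<Longrightarrow> d i \<le> y \<Longrightarrow> y \<le> 1 \<Longrightarrow>
   \<bar>gp i x - gp i y\<bar> \<le> lam * \<bar>x - y\<bar>"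
proof -
  assume a: "d i \<le> x" "x \<le> 1" "d i \<le> y" "y \<le> 1"
  have x0: "0 \<le> x" "0 \<le> y" using a d_pos[of i] by auto
  define c where "c = 1 - \<rho> (i+2)"
  define A where "A = c + th * x"
  define B where "B = c + th * y"
  have c: "0 < c" "c \<le> 1" using rho_lt1[of "i+2"] rho_pos[of "i+2"] unfolding c_def by auto
  have rc: "\<rho> i \<le> c" using pair2[of i] unfolding c_def by simp
  have tA: "th * x \<ge> th * dl" using dl_le[of i] a th_pos by (intro mult_left_mono) auto
  have tB: "th * y \<ge> 0" using x0 th_pos by simp
  have A: "c \<le> A" "c + th * dl \<le> A" using tA th_pos dl_pos unfolding A_def c_def
    by (auto simp: mult_nonneg_nonneg)
  have B: "c \<le> B" using tB unfolding B_def c_def by simp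
  have Ap: "A > 0" "B > 0" using A B c by auto
  have eq: "\<bar>gp i x - gp i y\<bar> = (\<rho> i / B) * (c / A) * \<bar>x - y\<bar>"
    using gp_diff[OF x0(1) a(2) x0(2) a(4), of i] Ap rho_pos[of i] c
    unfolding c_def[symmetric] A_def[symmetric] B_def[symmetric]
    by (simp add: abs_mult abs_divide abs_minus_commute)
  have f1: "\<rho> i / B \<le> 1" using rc B Ap by simp
  have f2: "c / A \<le> lam" using frac_lam[OF c A] .
  have "(\<rho> i / B) * (c / A) \<le> 1 * lam"
    using f1 f2 rho_pos[of i] Ap c by (intro mult_mono) auto
  then have "(\<rho> i / B) * (c / A) * \<bar>x - y\<bar> \<le> lam * \<bar>x - y\<bar>"
    by (intro mult_right_mono) auto
  then show ?thesis unfolding eq .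
qed

lemma gm_cont: "continuous_on {0..1} (gm i)"
proof -
  have "\<forall>x\<in>{0..1}. 1 - \<rho> (i+1) + th * (1 - x) \<noteq> 0" using den_m_pos[of _ i] by fastforce
  then show ?thesis unfolding gm_def by (intro continuous_intros) auto
qed
lemma gp_cont: "continuous_on {0..1} (gp i)"
proof -
  have "\<forall>x\<in>{0..1}. 1 - \<rho> (i+2) + th * x \<noteq> 0" using den_p_pos[of _ i] by fastforce
  then show ?thesis unfolding gp_def by (intro continuous_intros) auto
qed


lemma cyc_simps[simp]: "(i::3) + 1 + 2 = i" "(i::3) + 2 + 1 = i" "(i::3) + 3 = i"
  "(i::3) + 1 + 1 = i + 2" "(i::3) + 2 + 2 = i + 1"
  using three_cases[of i] by auto

lemma mid_eq: "gm (k+2) 0 = gp (k+1) 1"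
proof -
  have e: "1 - \<rho> k + th = \<rho> (k+1) + \<rho> (k+2)" using th_eq[of k] by simp
  have p: "\<rho> (k+1) + \<rho> (k+2) > 0" using rho_pos[of "k+1"] rho_pos[of "k+2"] by simp
  show ?thesis unfolding gm_def gp_def using e p by (simp add: field_simps add.commute)
qed

lemma st_src: "st (i,x) (j,y) \<Longrightarrow> 0 \<le> x \<and> x \<le> 1 \<and>
   ((j = i + 1 \<and> x \<le> d i \<and> y = gm i x) \<or> (j = i + 2 \<and> d i \<le> x \<and> y = gp i x))"
  by (auto simp: Dm_def Gm_def plus12_ne)

lemma inv1: "(j::3) = i + 1 \<Longrightarrow> i = j + 2" by simp
lemma inv2: "(j::3) = i + 2 \<Longrightarrow> i = j + 1" by simp

lemma st_srcm: "st (i,x) (k,y) \<Longrightarrow> k = i + 1 \<Longrightarrow> st (k+2,x) (k,y) \<and> y = gm (k+2) x \<and> x \<le> d (k+2) \<and> 0 \<le> x"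
proof -
  assume s: "st (i,x) (k,y)" and k: "k = i + 1"
  have i: "i = k + 2" using inv1[OF k] .
  show ?thesis using s st_src[OF s] k unfolding i by auto
qed

lemma st_srcp: "st (i,x) (k,y) \<Longrightarrow> k = i + 2 \<Longrightarrow> st (k+1,x) (k,y) \<and> y = gp (k+1) x \<and> d (k+1) \<le> x \<and> x \<le> 1"
proof -
  assume s: "st (i,x) (k,y)" and k: "k = i + 2"
  have i: "i = k + 1" using inv2[OF k] .
  have "k \<noteq> i + 1" using k plus12_ne[of i] by simp
  then show ?thesis using s st_src[OF s] k unfolding i by auto
qed

lemma st_int: "st a b \<Longrightarrow> 0 < snd b \<and> snd b < 1"
proof -
  obtain i x j y where ab: "a = (i,x)" "b = (j,y)" by (cases a, cases b)
  assume "st a b"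
  then have s: "st (i,x) (j,y)" using ab by simp
  from st_src[OF s] show ?thesis unfolding ab
    using gm_pos[of x i] gm_lt1[of x i] gp_pos[of x i] gp_lt1[of x i] d_pos[of i] d_lt1[of i] by auto
qed

lemma st_det: "st a b \<Longrightarrow> st a b' \<Longrightarrow> fst b = fst b' \<Longrightarrow> b = b'"
  by (cases a; cases b; cases b') auto

lemma two_succ: "st a b \<Longrightarrow> st a b' \<Longrightarrow> b \<noteq> b' \<Longrightarrow> snd a = d (fst a)"
proof -
  obtain i x where a: "a = (i,x)" by (cases a)
  obtain j y where b: "b = (j,y)" by (cases b)
  obtain j' y' where b': "b' = (j',y')" by (cases b')
  assume s: "st a b" "st a b'" "b \<noteq> b'"
  then have "j \<noteq> j'" using st_det[of a b b'] a b b' by auto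
  then show ?thesis using s a b b' by (auto simp: Dm_def)
qed

lemma st_exists: "0 \<le> x \<Longrightarrow> x \<le> 1 \<Longrightarrow> \<exists>b. st (i,x) b"
proof -
  assume x: "0 \<le> x" "x \<le> 1"
  show ?thesis
  proof (cases "x \<le> d i")
    case True
    then have "st (i,x) (i+1, Gm i (i+1) x)" using x by (simp add: Dm_def)
    then show ?thesis by blast
  next
    case False
    then have "st (i,x) (i+2, Gm i (i+2) x)" using x by (simp add: Dm_def)
    then show ?thesis by blast
  qed
qed

lemma gm_le_mid: "0 \<le> x \<Longrightarrow> x \<le> 1 \<Longrightarrow> gm i x \<le> gm i 0"
  using gm_strict[of 0 x i] by (cases "x = 0") auto
lemma gm_lt_mid: "0 < x \<Longrightarrow> x \<le> 1 \<Longrightarrow> gm i x < gm i 0"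
  using gm_strict[of 0 x i] by auto
lemma gp_ge_mid: "0 \<le> x \<Longrightarrow> x \<le> 1 \<Longrightarrow> gp i 1 \<le> gp i x"
  using gp_strict[of x 1 i] by (cases "x = 1") auto
lemma gp_gt_mid: "0 \<le> x \<Longrightarrow> x < 1 \<Longrightarrow> gp i 1 < gp i x"
  using gp_strict[of x 1 i] by auto

lemma st_inj: "st a c \<Longrightarrow> st b c \<Longrightarrow> 0 < snd a \<Longrightarrow> snd a < 1 \<Longrightarrow> 0 < snd b \<Longrightarrow> snd b < 1 \<Longrightarrow> a = b"
proof -
  obtain i x where a: "a = (i,x)" by (cases a)
  obtain i' x' where b: "b = (i',x')" by (cases b)
  obtain k y where c: "c = (k,y)" by (cases c)
  assume s: "st a c" "st b c" and ia: "0 < snd a" "snd a < 1" and ib: "0 < snd b" "snd b < 1"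
  have sa: "st (i,x) (k,y)" and sb: "st (i',x') (k,y)" using s a b c by auto
  have x: "0 < x" "x < 1" "0 < x'" "x' < 1" using ia ib a b by auto
  have mid: "gm (k+2) 0 = gp (k+1) 1" by (rule mid_eq)
  have ca: "k = i + 1 \<or> k = i + 2" and cb: "k = i' + 1 \<or> k = i' + 2"
    using st_src[OF sa] st_src[OF sb] by auto
  show ?thesis
  proof (cases "k = i + 1")
    case ka: True
    note A = st_srcm[OF sa ka]
    have ia: "i = k + 2" using inv1[OF ka] .
    show ?thesis
    proof (cases "k = i' + 1")
      case kb: True
      note B = st_srcm[OF sb kb]
      have ib: "i' = k + 2" using inv1[OF kb] .
      have "x = x'"
      proof (rule ccontr)
        assume "x \<noteq> x'"
        then have "x < x' \<or> x' < x" by auto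
        then show False using gm_strict[of x x' "k+2"] gm_strict[of x' x "k+2"] x A B by auto
      qed
      then show ?thesis using a b ia ib by simp
    next
      case kb: False
      then have kb: "k = i' + 2" using cb by simp
      note B = st_srcp[OF sb kb]
      have "y < gm (k+2) 0" using A gm_lt_mid[of x "k+2"] x by simp
      moreover have "y > gp (k+1) 1" using B gp_gt_mid[of x' "k+1"] x by simp
      ultimately show ?thesis using mid by simp
    qed
  next
    case ka: False
    then have ka: "k = i + 2" using ca by simp
    note A = st_srcp[OF sa ka]
    have ia: "i = k + 1" using inv2[OF ka] .
    show ?thesis
    proof (cases "k = i' + 1")
      case kb: True
      note B = st_srcm[OF sb kb]
      have "y < gm (k+2) 0" using B gm_lt_mid[of x' "k+2"] x by simp
      moreover have "y > gp (k+1) 1" using A gp_gt_mid[of x "k+1"] x by simp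
      ultimately show ?thesis using mid by simp
    next
      case kb: False
      then have kb: "k = i' + 2" using cb by simp
      note B = st_srcp[OF sb kb]
      have ib: "i' = k + 1" using inv2[OF kb] .
      have "x = x'"
      proof (rule ccontr)
        assume "x \<noteq> x'"
        then have "x < x' \<or> x' < x" by auto
        then show False using gp_strict[of x x' "k+1"] gp_strict[of x' x "k+1"] x A B by auto
      qed
      then show ?thesis using a b ia ib by simp
    qed
  qed
qed

lemma st_target_bounds: "st a (k,y) \<Longrightarrow> gm (k+2) (d (k+2)) \<le> y \<and> y \<le> gp (k+1) (d (k+1))"
proof -
  obtain i x where a: "a = (i,x)" by (cases a)
  assume "st a (k,y)"
  then have s: "st (i,x) (k,y)" using a by simp
  have ca: "k = i + 1 \<or> k = i + 2" using st_src[OF s] by auto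
  have mid: "gm (k+2) 0 = gp (k+1) 1" by (rule mid_eq)
  have m1: "gm (k+2) (d (k+2)) \<le> gm (k+2) 0"
    using gm_le_mid[of "d (k+2)" "k+2"] d_pos d_lt1 by (simp add: less_imp_le)
  have m2: "gp (k+1) 1 \<le> gp (k+1) (d (k+1))"
    using gp_ge_mid[of "d (k+1)" "k+1"] d_pos d_lt1 by (simp add: less_imp_le)
  show ?thesis
  proof (cases "k = i + 1")
    case True
    note y = st_srcm[OF s True]
    have "gm (k+2) (d (k+2)) \<le> y"
      using gm_strict[of x "d (k+2)" "k+2"] y d_lt1[of "k+2"] by (cases "x = d (k+2)") auto
    moreover have "y \<le> gm (k+2) 0" using y gm_le_mid[of x "k+2"] d_lt1[of "k+2"] by simp
    ultimately show ?thesis using mid m2 by simp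
  next
    case False
    then have kk: "k = i + 2" using ca by simp
    note y = st_srcp[OF s kk]
    have "y \<le> gp (k+1) (d (k+1))"
      using gp_strict[of "d (k+1)" x "k+1"] y d_pos[of "k+1"] by (cases "x = d (k+1)") auto
    moreover have "gp (k+1) 1 \<le> y" using y gp_ge_mid[of x "k+1"] d_pos[of "k+1"] by simp
    ultimately show ?thesis using mid m1 by simp
  qed
qed

lemma st_img_conv: "st a (k,y1) \<Longrightarrow> st b (k,y2) \<Longrightarrow> y1 \<le> y \<Longrightarrow> y \<le> y2 \<Longrightarrow> \<exists>c. st c (k,y)"
proof -
  assume a: "st a (k,y1)" "st b (k,y2)" "y1 \<le> y" "y \<le> y2"
  have lo: "gm (k+2) (d (k+2)) \<le> y" using st_target_bounds[OF a(1)] a(3) by simp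
  have hi: "y \<le> gp (k+1) (d (k+1))" using st_target_bounds[OF a(2)] a(4) by simp
  have mid: "gm (k+2) 0 = gp (k+1) 1" by (rule mid_eq)
  show ?thesis
  proof (cases "y \<le> gm (k+2) 0")
    case True
    have cont: "continuous_on {0..d (k+2)} (gm (k+2))"
      by (rule continuous_on_subset[OF gm_cont]) (use d_lt1[of "k+2"] in auto)
    obtain x where x: "0 \<le> x" "x \<le> d (k+2)" "gm (k+2) x = y"
      using IVT2'[of "gm (k+2)" "d (k+2)" y 0, OF lo True _ cont] d_pos[of "k+2"] by auto
    have "st (k+2, x) (k, y)" using x d_lt1[of "k+2"] by (simp add: Dm_def Gm_def)
    then show ?thesis by blast
  next
    case False
    then have y: "gp (k+1) 1 \<le> y" using mid by simp
    have cont: "continuous_on {d (k+1)..1} (gp (k+1))"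
      by (rule continuous_on_subset[OF gp_cont]) (use d_pos[of "k+1"] in auto)
    obtain x where x: "d (k+1) \<le> x" "x \<le> 1" "gp (k+1) x = y"
      using IVT2'[of "gp (k+1)" 1 y "d (k+1)", OF y hi _ cont] d_lt1[of "k+1"] by auto
    have "st (k+1, x) (k, y)" using x d_pos[of "k+1"] plus12_ne[of "k+1"] by (simp add: Dm_def Gm_def)
    then show ?thesis by blast
  qed
qed

lemma st_strict: "st (i,x) (j,y) \<Longrightarrow> st (i,x') (j,y') \<Longrightarrow> x < x' \<Longrightarrow> y' < y"
  using gm_strict[of x x' i] gp_strict[of x x' i]
  by (auto simp: Dm_def Gm_def plus12_ne)

lemma st_contr: "st (i,x) (j,y) \<Longrightarrow> st (i,x') (j,y') \<Longrightarrow> \<bar>y - y'\<bar> \<le> lam * \<bar>x - x'\<bar>"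
  using gm_contr[of x i x'] gp_contr[of i x x']
  by (auto simp: Dm_def Gm_def plus12_ne)

lemma st_dom: "st (i,x) (j,y) \<Longrightarrow> (j = i + 1 \<and> x \<le> d i) \<or> (j = i + 2 \<and> d i \<le> x)"
  by (auto simp: Dm_def)

end


context sys begin

definition emb :: "3 \<times> real \<Rightarrow> real^3" where "emb s = spt (snd s) (fst s)"

lemma spt_nth: "spt x i $ l = (if l = i + 1 then 1 - x else if l = i + 2 then x else 0)"
  unfolding spt_def using plus12_ne[of i] by (auto simp: axis_def)

lemma fmap_nth: "fmap \<rho> j z $ l = (if l = j then 0 else
   ((1 - \<rho> j) * z$l + \<rho> l * z$j) / ((1 - \<rho> j) + th * z$j))"
proof -
  have "fmap \<rho> j z $ l = (\<Sum>i\<in>UNIV - {j}. (((1 - \<rho> j) * z$i + \<rho> i * z$j) / ((1 - \<rho> j) + th * z$j)) * (axis i 1 :: real^3) $ l)"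
    unfolding fmap_def by (simp add: sum_component)
  also have "\<dots> = (\<Sum>i\<in>UNIV - {j}. if l = i then (((1 - \<rho> j) * z$i + \<rho> i * z$j) / ((1 - \<rho> j) + th * z$j)) else 0)"
    by (intro sum.cong) (auto simp: axis_def)
  also have "\<dots> = (if l = j then 0 else ((1 - \<rho> j) * z$l + \<rho> l * z$j) / ((1 - \<rho> j) + th * z$j))"
    by (simp add: sum.delta')
  finally show ?thesis .
qed

lemma fmap_spt_m: "0 \<le> x \<Longrightarrow> x \<le> 1 \<Longrightarrow> fmap \<rho> (i+1) (spt x i) = spt (gm i x) (i+1)"
proof -
  assume x: "0 \<le> x" "x \<le> 1"
  have D: "1 - \<rho> (i+1) + th * (1 - x) > 0" by (rule den_m_pos[OF x])
  have e: "\<rho> i + \<rho> (i+2) = 1 - \<rho> (i+1) + th" using th_eq[of i] by simp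
  show ?thesis
  proof (rule vec_eq_iff[THEN iffD2], rule allI)
    fix l :: 3
    consider "l = i" | "l = i + 1" | "l = i + 2" using three_cases[of i] three_cases[of l] by fastforce
    then show "fmap \<rho> (i+1) (spt x i) $ l = spt (gm i x) (i+1) $ l"
    proof cases
      case 1 then show ?thesis using plus12_ne[of i]
        by (simp add: fmap_nth spt_nth gm_def)
    next
      case 2 then show ?thesis using plus12_ne[of i] by (simp add: fmap_nth spt_nth)
    next
      case 3
      have "((1 - \<rho> (i+1)) * x + \<rho> (i+2) * (1 - x)) / (1 - \<rho> (i+1) + th * (1 - x)) = 1 - gm i x"
        using D unfolding gm_def by (simp add: field_simps) (simp add: th_eq[of i] algebra_simps)
      then show ?thesis using 3 plus12_ne[of i] by (simp add: fmap_nth spt_nth)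
    qed
  qed
qed


lemma fmap_spt_p: "0 \<le> x \<Longrightarrow> x \<le> 1 \<Longrightarrow> fmap \<rho> (i+2) (spt x i) = spt (gp i x) (i+2)"
proof -
  assume x: "0 \<le> x" "x \<le> 1"
  have D: "1 - \<rho> (i+2) + th * x > 0" by (rule den_p_pos[OF x])
  show ?thesis
  proof (rule vec_eq_iff[THEN iffD2], rule allI)
    fix l :: 3
    consider "l = i" | "l = i + 1" | "l = i + 2" using three_cases[of i] three_cases[of l] by fastforce
    then show "fmap \<rho> (i+2) (spt x i) $ l = spt (gp i x) (i+2) $ l"
    proof cases
      case 1 then show ?thesis using plus12_ne[of i]
        by (simp add: fmap_nth spt_nth gp_def)
    next
      case 2
      have "((1 - \<rho> (i+2)) * (1 - x) + \<rho> (i+1) * x) / (1 - \<rho> (i+2) + th * x) = gp i x"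
        using D unfolding gp_def by (simp add: field_simps) (simp add: th_eq[of i] algebra_simps)
      then show ?thesis using 2 plus12_ne[of i] by (simp add: fmap_nth spt_nth)
    next
      case 3 then show ?thesis using plus12_ne[of i] by (simp add: fmap_nth spt_nth)
    qed
  qed
qed

lemma fmap_emb: "st s t \<Longrightarrow> fmap \<rho> (fst t) (emb s) = emb t"
proof -
  obtain i x where s: "s = (i,x)" by (cases s)
  obtain j y where t: "t = (j,y)" by (cases t)
  assume "st s t"
  then have st: "st (i,x) (j,y)" using s t by simp
  from st_src[OF st] show ?thesis unfolding s t emb_def
    using fmap_spt_m[of x i] fmap_spt_p[of x i] by auto
qed

lemma Rule_iff: "j \<in> Rule d z \<longleftrightarrow> (\<exists>x i. 0 \<le> x \<and> x \<le> 1 \<and> z = spt x i \<and> Dm i j x)"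
  unfolding Rule_def Dm_def using plus12_ne by (auto, force+)

lemma emb_st: "st s t \<Longrightarrow> emb t \<in> phi \<rho> d (emb s)"
proof -
  obtain i x where s: "s = (i,x)" by (cases s)
  obtain j y where t: "t = (j,y)" by (cases t)
  assume a: "st s t"
  then have st: "st (i,x) (j,y)" using s t by simp
  have "j \<in> Rule d (emb s)" unfolding Rule_iff using st s by (auto simp: emb_def)
  moreover have "fmap \<rho> j (emb s) = emb t" using fmap_emb[OF a] t by simp
  ultimately show ?thesis unfolding phi_def by (auto intro!: exI[of _ j])
qed

lemma phi_st: "y \<in> phi \<rho> d z \<Longrightarrow> \<exists>s t. emb s = z \<and> st s t \<and> y = emb t"
proof -
  assume "y \<in> phi \<rho> d z"
  then obtain j where j: "j \<in> Rule d z" and y: "y = fmap \<rho> j z" unfolding phi_def by blast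
  from j obtain x i where x: "0 \<le> x" "x \<le> 1" "z = spt x i" "Dm i j x" unfolding Rule_iff by blast
  have st: "st (i,x) (j, Gm i j x)" using x by simp
  have "y = emb (j, Gm i j x)" using fmap_emb[OF st] x y by (simp add: emb_def)
  moreover have "emb (i,x) = z" using x by (simp add: emb_def)
  ultimately show ?thesis using st by blast
qed

lemma emb_inj: "0 < snd s \<Longrightarrow> snd s < 1 \<Longrightarrow> 0 \<le> snd s' \<Longrightarrow> snd s' \<le> 1 \<Longrightarrow> emb s = emb s' \<Longrightarrow> s = s'"
proof -
  obtain i x where s: "s = (i,x)" by (cases s)
  obtain i' x' where s': "s' = (i',x')" by (cases s')
  assume a: "0 < snd s" "snd s < 1" "0 \<le> snd s'" "snd s' \<le> 1" "emb s = emb s'"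
  have x: "0 < x" "x < 1" "0 \<le> x'" "x' \<le> 1" using a s s' by auto
  have e: "\<And>l. spt x i $ l = spt x' i' $ l" using a s s' by (simp add: emb_def)
  consider "i' = i" | "i' = i + 1" | "i' = i + 2" using three_cases[of i] three_cases[of i'] by fastforce
  then show ?thesis
  proof cases
    case 1
    have "x = x'" using e[of "i+2"] 1 plus12_ne[of i] by (simp add: spt_nth)
    then show ?thesis using 1 s s' by simp
  next
    case 2
    have "spt x' i' $ i = 0 \<or> True" by simp
    have a1: "spt x i $ i = 0" using plus12_ne[of i] by (simp add: spt_nth)
    have a2: "spt x' i' $ i = x'" using 2 by (simp add: spt_nth)
    have a3: "spt x i $ (i+1) = 1 - x" by (simp add: spt_nth)
    have a4: "spt x' i' $ (i+1) = 0" using 2 plus12_ne[of "i+1"] by (simp add: spt_nth)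
    show ?thesis using e[of i] e[of "i+1"] a1 a2 a3 a4 x by simp
  next
    case 3
    have a1: "spt x i $ i = 0" using plus12_ne[of i] by (simp add: spt_nth)
    have a2: "spt x' i' $ i = 1 - x'" using 3 by (simp add: spt_nth)
    have a3: "spt x i $ (i+2) = x" using plus12_ne[of i] by (simp add: spt_nth)
    have a4: "spt x' i' $ (i+2) = 0" using 3 plus12_ne[of "i+2"] by (simp add: spt_nth)
    show ?thesis using e[of i] e[of "i+2"] a1 a2 a3 a4 x by simp
  qed
qed

lemma phi_int: "0 < snd s \<Longrightarrow> snd s < 1 \<Longrightarrow> y \<in> phi \<rho> d (emb s) \<Longrightarrow> \<exists>t. st s t \<and> y = emb t"
proof -
  assume a: "0 < snd s" "snd s < 1" "y \<in> phi \<rho> d (emb s)"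
  from phi_st[OF a(3)] obtain s' t where st: "emb s' = emb s" "st s' t" "y = emb t" by blast
  have "0 \<le> snd s'" "snd s' \<le> 1" using st(2) by (cases s'; cases t; auto)+
  then have "s = s'" using emb_inj[OF a(1,2)] st(1) by simp
  then show ?thesis using st by blast
qed

lemma Sides_emb: "0 < snd s \<Longrightarrow> snd s < 1 \<Longrightarrow> Sides (emb s) = {fst s}"
proof -
  obtain i x where s: "s = (i,x)" by (cases s)
  assume a: "0 < snd s" "snd s < 1"
  have x: "0 < x" "x < 1" using a s by auto
  have "emb s \<in> A0side l \<longleftrightarrow> l = i" for l
  proof -
    have sum: "spt x i $ 1 + spt x i $ 2 + spt x i $ 3 = 1"
      using three_cases[of i] by (auto simp: spt_nth)
    have nn: "\<forall>l. spt x i $ l \<ge> 0" using x by (simp add: spt_nth)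
    have "spt x i $ l = 0 \<longleftrightarrow> l = i" using x three_cases[of l] three_cases[of i]
      by (auto simp: spt_nth)
    then show ?thesis unfolding A0side_def s emb_def using sum nn by auto
  qed
  then show ?thesis unfolding Sides_def s by auto
qed

lemma vert_succ: "st (i,x) t \<Longrightarrow> (x = 0 \<or> x = 1) \<Longrightarrow> t = (fst t, gm (fst t + 2) 0)"
proof -
  obtain j y where t: "t = (j,y)" by (cases t)
  assume a: "st (i,x) t" "x = 0 \<or> x = 1"
  then have st: "st (i,x) (j,y)" using t by simp
  show ?thesis
  proof (cases "j = i + 1")
    case True
    note A = st_srcm[OF st True]
    have "x = 0" using a(2) A d_lt1[of "j+2"] by auto
    then show ?thesis using A t by simp
  next
    case False
    then have jj: "j = i + 2" using st_src[OF st] by auto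
    note A = st_srcp[OF st jj]
    have "x = 1" using a(2) A d_pos[of "j+1"] by auto
    then show ?thesis using A t mid_eq[of j] by simp
  qed
qed

lemma mid_no_int_pred: "st a (k, gm (k+2) 0) \<Longrightarrow> snd a = 0 \<or> snd a = 1"
proof -
  obtain i x where a: "a = (i,x)" by (cases a)
  assume "st a (k, gm (k+2) 0)"
  then have st: "st (i,x) (k, gm (k+2) 0)" using a by simp
  show ?thesis
  proof (cases "k = i + 1")
    case True
    note A = st_srcm[OF st True]
    have "x = 0" using A gm_lt_mid[of x "k+2"] d_lt1[of "k+2"] by force
    then show ?thesis using a by simp
  next
    case False
    then have kk: "k = i + 2" using st_src[OF st] by auto
    note A = st_srcp[OF st kk]
    have "x = 1" using A gp_gt_mid[of x "k+1"] mid_eq[of k] d_pos[of "k+1"] by force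
    then show ?thesis using a by simp
  qed
qed

end


context sys begin

definition bp :: "nat \<Rightarrow> 3 \<times> real \<Rightarrow> (nat \<Rightarrow> 3 \<times> real) \<Rightarrow> bool" where
  "bp N s p \<longleftrightarrow> p 0 = s \<and> (\<forall>k<N. st (p (Suc k)) (p k))"

definition deep :: "nat \<Rightarrow> 3 \<times> real \<Rightarrow> bool" where
  "deep N s \<longleftrightarrow> (\<exists>p. bp N s p)"

definition wd :: "nat \<Rightarrow> 3 \<times> real \<Rightarrow> 3 list" where
  "wd N s = (SOME c. \<exists>p. bp N s p \<and> c = map (\<lambda>k. fst (p k)) [0..<N])"

lemma bp_mono: "bp N s p \<Longrightarrow> M \<le> N \<Longrightarrow> bp M s p"
  unfolding bp_def by auto

lemma deep_mono: "deep N s \<Longrightarrow> M \<le> N \<Longrightarrow> deep M s"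
  unfolding deep_def using bp_mono by blast

lemma st_src_bounds: "st a b \<Longrightarrow> 0 \<le> snd a \<and> snd a \<le> 1"
  by (cases a; cases b) auto

lemma bp_int: "bp N s p \<Longrightarrow> k < N \<Longrightarrow> 0 < snd (p k) \<and> snd (p k) < 1"
  unfolding bp_def using st_int by blast

lemma bp_uniq: "bp N s p \<Longrightarrow> bp N s q \<Longrightarrow> k < N \<Longrightarrow> p k = q k"
proof (induction k)
  case 0 then show ?case by (simp add: bp_def)
next
  case (Suc k)
  have IH: "p k = q k" using Suc by simp
  have a: "st (p (Suc k)) (p k)" "st (q (Suc k)) (q k)" using Suc.prems unfolding bp_def by auto
  have i1: "0 < snd (p (Suc k)) \<and> snd (p (Suc k)) < 1" using bp_int[OF Suc.prems(1) Suc.prems(3)] .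
  have i2: "0 < snd (q (Suc k)) \<and> snd (q (Suc k)) < 1" using bp_int[OF Suc.prems(2) Suc.prems(3)] .
  show ?case using st_inj[of "p (Suc k)" "p k" "q (Suc k)"] a IH i1 i2 by auto
qed

lemma wd_eq: "bp N s p \<Longrightarrow> wd N s = map (\<lambda>k. fst (p k)) [0..<N]"
proof -
  assume b: "bp N s p"
  have "\<exists>q. bp N s q \<and> wd N s = map (\<lambda>k. fst (q k)) [0..<N]"
    unfolding wd_def by (rule someI_ex) (use b in blast)
  then obtain q where q: "bp N s q" "wd N s = map (\<lambda>k. fst (q k)) [0..<N]" by blast
  have "map (\<lambda>k. fst (q k)) [0..<N] = map (\<lambda>k. fst (p k)) [0..<N]"
    using bp_uniq[OF b q(1)] by (intro map_cong) auto
  then show ?thesis using q by simp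
qed

lemma wd_len: "deep N s \<Longrightarrow> length (wd N s) = N"
  unfolding deep_def using wd_eq by fastforce

lemma wd_nth: "bp N s p \<Longrightarrow> k < N \<Longrightarrow> wd N s ! k = fst (p k)"
  using wd_eq by simp

lemma wd_same: "bp N s p \<Longrightarrow> bp N s' p' \<Longrightarrow> wd N s = wd N s' \<longleftrightarrow> (\<forall>k<N. fst (p k) = fst (p' k))"
  using wd_eq[of N s p] wd_eq[of N s' p'] by (auto simp: map_eq_conv)

definition pcons :: "3 \<times> real \<Rightarrow> (nat \<Rightarrow> 3 \<times> real) \<Rightarrow> nat \<Rightarrow> 3 \<times> real" where
  "pcons t p k = (if k = 0 then t else p (k - 1))"

lemma bp_cons: "st s t \<Longrightarrow> bp N s p \<Longrightarrow> bp (Suc N) t (pcons t p)"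
proof -
  assume a: "st s t" "bp N s p"
  have "st (pcons t p (Suc k)) (pcons t p k)" if k: "k < Suc N" for k
  proof (cases k)
    case 0 then show ?thesis using a by (simp add: pcons_def bp_def)
  next
    case (Suc k') then show ?thesis using a k by (simp add: pcons_def bp_def)
  qed
  then show ?thesis unfolding bp_def by (simp add: pcons_def)
qed

lemma wd_succ: "st s t \<Longrightarrow> deep N s \<Longrightarrow> deep N t \<and> wd N t = take N (fst t # wd N s)"
proof -
  assume a: "st s t" "deep N s"
  then obtain p where p: "bp N s p" unfolding deep_def by blast
  have b: "bp (Suc N) t (pcons t p)" using bp_cons[OF a(1) p] .
  have b': "bp N t (pcons t p)" using bp_mono[OF b, of N] by simp
  have e1: "wd N t = map (\<lambda>k. fst (pcons t p k)) [0..<N]" using wd_eq[OF b'] .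
  have e2: "wd N s = map (\<lambda>k. fst (p k)) [0..<N]" using wd_eq[OF p] .
  have "map (\<lambda>k. fst (pcons t p k)) [0..<N] = take N (fst t # map (\<lambda>k. fst (p k)) [0..<N])"
  proof (rule nth_equalityI)
    show "length (map (\<lambda>k. fst (pcons t p k)) [0..<N]) = length (take N (fst t # map (\<lambda>k. fst (p k)) [0..<N]))"
      by simp
  next
    fix k assume "k < length (map (\<lambda>k. fst (pcons t p k)) [0..<N])"
    then have k: "k < N" by simp
    have l: "map (\<lambda>k. fst (pcons t p k)) [0..<N] ! k = fst (pcons t p k)" using k by simp
    have r: "take N (fst t # map (\<lambda>k. fst (p k)) [0..<N]) ! k = (fst t # map (\<lambda>k. fst (p k)) [0..<N]) ! k"
      using k by (simp only: nth_take)
    show "map (\<lambda>k. fst (pcons t p k)) [0..<N] ! k = take N (fst t # map (\<lambda>k. fst (p k)) [0..<N]) ! k"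
    proof (cases k)
      case 0 then show ?thesis using l r by (simp add: pcons_def)
    next
      case (Suc k')
      have "(fst t # map (\<lambda>k. fst (p k)) [0..<N]) ! k = fst (p k')" using Suc k by simp
      then show ?thesis using l r Suc by (simp add: pcons_def)
    qed
  qed
  then have "wd N t = take N (fst t # wd N s)" using e1 e2 by simp
  moreover have "deep N t" using b' unfolding deep_def by blast
  ultimately show ?thesis by simp
qed

lemma st_sgn: "st a b \<Longrightarrow> st a' b' \<Longrightarrow> fst a = fst a' \<Longrightarrow> fst b = fst b' \<Longrightarrow>
  sgn (snd b - snd b') = - sgn (snd a - snd a')"
proof -
  obtain i x where a: "a = (i,x)" by (cases a)
  obtain i' x' where a': "a' = (i',x')" by (cases a')
  obtain j y where b: "b = (j,y)" by (cases b)
  obtain j' y' where b': "b' = (j',y')" by (cases b')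
  assume h: "st a b" "st a' b'" "fst a = fst a'" "fst b = fst b'"
  have s1: "st (i,x) (j,y)" and s2: "st (i,x') (j,y')" using h a a' b b' by auto
  consider "x < x'" | "x = x'" | "x' < x" by linarith
  then show ?thesis
  proof cases
    case 1 then have "y' < y" using st_strict[OF s1 s2] by simp
    then show ?thesis using 1 a a' b b' by (simp add: sgn_if)
  next
    case 2 then have "y = y'" using s1 s2 by simp
    then show ?thesis using 2 a a' b b' by simp
  next
    case 3 then have "y < y'" using st_strict[OF s2 s1] by simp
    then show ?thesis using 3 a a' b b' by (simp add: sgn_if)
  qed
qed

lemma ot: "bp N s p \<Longrightarrow> bp N S P \<Longrightarrow> (\<forall>k<N. fst (p k) = fst (P k)) \<Longrightarrow> j < N \<Longrightarrow>
  sgn (snd (p j) - snd (P j)) = (-1)^j * sgn (snd s - snd S)"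
proof (induction j)
  case 0 then show ?case by (simp add: bp_def)
next
  case (Suc j)
  have s: "st (p (Suc j)) (p j)" "st (P (Suc j)) (P j)" using Suc.prems unfolding bp_def by auto
  have e: "sgn (snd (p j) - snd (P j)) = - sgn (snd (p (Suc j)) - snd (P (Suc j)))"
    using st_sgn[OF s] Suc.prems(3,4) by auto
  have "sgn (snd (p j) - snd (P j)) = (-1)^j * sgn (snd s - snd S)" using Suc by simp
  then show ?case using e by simp
qed

lemma Gm_cont: "continuous_on {0..1} (Gm i j)"
proof (cases "j = i + 1")
  case True
  then have "Gm i j = gm i" by (auto simp: Gm_def)
  then show ?thesis using gm_cont by simp
next
  case False
  then have "Gm i j = gp i" by (auto simp: Gm_def fun_eq_iff)
  then show ?thesis using gp_cont by simp
qed

lemma st_ivt: "st (i,u) (j,yu) \<Longrightarrow> st (i,v) (j,yv) \<Longrightarrow> u \<le> v \<Longrightarrow> yv \<le> y \<Longrightarrow> y \<le> yu \<Longrightarrow>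
   \<exists>z. u \<le> z \<and> z \<le> v \<and> st (i,z) (j,y)"
proof -
  assume a: "st (i,u) (j,yu)" "st (i,v) (j,yv)" "u \<le> v" "yv \<le> y" "y \<le> yu"
  have u: "0 \<le> u" "Dm i j u" "yu = Gm i j u" and v: "v \<le> 1" "Dm i j v" "yv = Gm i j v" using a by auto
  have cont: "continuous_on {u..v} (Gm i j)"
    by (rule continuous_on_subset[OF Gm_cont]) (use u v in auto)
  obtain z where z: "u \<le> z" "z \<le> v" "Gm i j z = y"
    using IVT2'[of "Gm i j" v y u, OF _ _ a(3) cont] a(4,5) u v by auto
  have "Dm i j z" using u(2) v(2) z(1,2) unfolding Dm_def by auto
  then have "st (i,z) (j,y)" using z u v by simp
  then show ?thesis using z by blast
qed

lemma ivtw: "bp (Suc N) s p \<Longrightarrow> bp (Suc N) s' p' \<Longrightarrow> (\<forall>k<Suc N. fst (p k) = fst (p' k)) \<Longrightarrow>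
   min (snd s) (snd s') \<le> y \<Longrightarrow> y \<le> max (snd s) (snd s') \<Longrightarrow>
   \<exists>P. bp (Suc N) (fst s, y) P \<and> (\<forall>k<Suc N. fst (P k) = fst (p k))"
proof (induction N arbitrary: s s' p p' y)
  case 0
  have q: "p 0 = s" "p' 0 = s'" "st (p 1) (p 0)" "st (p' 1) (p' 0)" "fst s = fst s'"
    using 0(1,2,3) unfolding bp_def by auto
  have s1: "st (p 1) (fst s, snd s)" "st (p' 1) (fst s, snd s')"
    using q by (metis prod.collapse)+
  obtain c where c: "st c (fst s, y)"
  proof (cases "snd s \<le> snd s'")
    case True
    have "snd s \<le> y" "y \<le> snd s'" using True 0(4,5) by auto
    then show ?thesis using st_img_conv[OF s1(1) s1(2)] that by blast
  next
    case False
    have "snd s' \<le> y" "y \<le> snd s" using False 0(4,5) by auto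
    then show ?thesis using st_img_conv[OF s1(2) s1(1)] that by blast
  qed
  let ?P = "\<lambda>k. if k = 0 then (fst s, y) else c"
  have "bp (Suc 0) (fst s, y) ?P" using c unfolding bp_def by auto
  moreover have "\<forall>k<Suc 0. fst (?P k) = fst (p k)" using 0(1) by (simp add: bp_def)
  ultimately show ?case by blast
next
  case (Suc N)
  have p0: "p 0 = s" "p' 0 = s'" using Suc.prems unfolding bp_def by auto
  have s1: "st (p 1) (p 0)" "st (p' 1) (p' 0)" using Suc.prems(1,2) unfolding bp_def by auto
  have sides: "fst (p 1) = fst (p' 1)" "fst s = fst s'" using Suc.prems(3) p0 by auto
  obtain c1 u where pu: "p 1 = (c1, u)" by (cases "p 1")
  obtain v where pv: "p' 1 = (c1, v)" using sides(1) pu by (cases "p' 1") auto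
  obtain c0 where c0: "fst s = c0" by simp
  have sa: "st (c1,u) (c0, snd s)" using s1(1) pu p0 c0 by (metis prod.collapse)
  have sb: "st (c1,v) (c0, snd s')" using s1(2) pv p0 c0 sides(2) by (metis prod.collapse)
  let ?q = "\<lambda>k. p (Suc k)" and ?q' = "\<lambda>k. p' (Suc k)"
  have bq: "bp (Suc N) (c1,u) ?q" "bp (Suc N) (c1,v) ?q'"
    using Suc.prems(1,2) pu pv unfolding bp_def by auto
  have sq: "\<forall>k<Suc N. fst (?q k) = fst (?q' k)" using Suc.prems(3) by auto
  obtain z where z: "min u v \<le> z" "z \<le> max u v" "st (c1, z) (c0, y)"
  proof (cases "u \<le> v")
    case True
    have "snd s' \<le> snd s" using st_strict[OF sa sb] True by (cases "u = v") (use sa sb in auto)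
    then obtain z where "u \<le> z" "z \<le> v" "st (c1,z) (c0,y)"
      using st_ivt[OF sa sb True] Suc.prems(4,5) by (auto simp: min_def max_def split: if_splits)
    then show ?thesis using that True by auto
  next
    case False
    then have F: "v \<le> u" by simp
    have "snd s \<le> snd s'" using st_strict[OF sb sa] F by (cases "u = v") (use sa sb in auto)
    then obtain z where "v \<le> z" "z \<le> u" "st (c1,z) (c0,y)"
      using st_ivt[OF sb sa F] Suc.prems(4,5) by (auto simp: min_def max_def split: if_splits)
    then show ?thesis using that F by auto
  qed
  obtain P' where P': "bp (Suc N) (c1, z) P'" "\<forall>k<Suc N. fst (P' k) = fst (?q k)"
    using Suc.IH[OF bq sq] z(1,2) by auto
  have "bp (Suc (Suc N)) (c0, y) (pcons (c0,y) P')"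
    using bp_cons[OF _ P'(1)] z(3) by simp
  moreover have "\<forall>k<Suc (Suc N). fst (pcons (c0,y) P' k) = fst (p k)"
    using P'(2) p0 c0 by (auto simp: pcons_def less_Suc_eq_0_disj)
  ultimately show ?case using c0 by blast
qed

end


context sys begin

fun Xs :: "nat \<Rightarrow> (nat \<Rightarrow> 3) \<Rightarrow> real set" where
  "Xs 0 c = {0..1}"
| "Xs (Suc n) c = Gm (c 1) (c 0) ` (Xs n (\<lambda>k. c (Suc k)) \<inter> {x. Dm (c 1) (c 0) x})"

lemma Xs_sub: "Xs n c \<subseteq> {0..1}"
proof (induction n arbitrary: c)
  case 0 then show ?case by simp
next
  case (Suc n)
  show ?case
  proof
    fix x assume "x \<in> Xs (Suc n) c"
    then obtain y where y: "y \<in> Xs n (\<lambda>k. c (Suc k))" "Dm (c 1) (c 0) y" "x = Gm (c 1) (c 0) y" by auto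
    have "y \<in> {0..1}" using Suc y(1) by blast
    then have "st (c 1, y) (c 0, x)" using y by simp
    then show "x \<in> {0..1}" using st_int[of "(c 1, y)" "(c 0, x)"] by simp
  qed
qed

lemma Dm_closed: "closed {x. Dm i j x}"
proof -
  have "{x. Dm i j x} = (if j = i + 1 then {..d i} else {}) \<union> (if j = i + 2 then {d i..} else {})"
    unfolding Dm_def by auto
  then show ?thesis by simp
qed

lemma Xs_compact: "compact (Xs n c)"
proof (induction n arbitrary: c)
  case 0 then show ?case by simp
next
  case (Suc n)
  have c1: "compact (Xs n (\<lambda>k. c (Suc k)) \<inter> {x. Dm (c 1) (c 0) x})"
    using Suc.IH Dm_closed by (rule compact_Int_closed)
  have "continuous_on (Xs n (\<lambda>k. c (Suc k)) \<inter> {x. Dm (c 1) (c 0) x}) (Gm (c 1) (c 0))"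
    by (rule continuous_on_subset[OF Gm_cont]) (use Xs_sub in blast)
  then show ?case using compact_continuous_image c1 by simp
qed

lemma Xs_char: "x \<in> Xs n c \<longleftrightarrow> (\<exists>p. p 0 = (c 0, x) \<and> (\<forall>k<n. st (p (Suc k)) (p k)) \<and>
    (\<forall>k\<le>n. fst (p k) = c k) \<and> 0 \<le> snd (p n) \<and> snd (p n) \<le> 1)"
proof (induction n arbitrary: c x)
  case 0
  show ?case
  proof
    assume "x \<in> Xs 0 c"
    then show "\<exists>p. p 0 = (c 0, x) \<and> (\<forall>k<0. st (p (Suc k)) (p k)) \<and> (\<forall>k\<le>0. fst (p k) = c k) \<and> 0 \<le> snd (p 0) \<and> snd (p 0) \<le> 1"
      by (intro exI[of _ "\<lambda>k. (c 0, x)"]) auto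
  next
    assume "\<exists>p. p 0 = (c 0, x) \<and> (\<forall>k<0. st (p (Suc k)) (p k)) \<and> (\<forall>k\<le>0. fst (p k) = c k) \<and> 0 \<le> snd (p 0) \<and> snd (p 0) \<le> 1"
    then show "x \<in> Xs 0 c" by auto
  qed
next
  case (Suc n)
  show ?case
  proof
    assume "x \<in> Xs (Suc n) c"
    then obtain y where y: "y \<in> Xs n (\<lambda>k. c (Suc k))" "Dm (c 1) (c 0) y" "x = Gm (c 1) (c 0) y" by auto
    obtain q where q: "q 0 = (c 1, y)" "\<forall>k<n. st (q (Suc k)) (q k)" "\<forall>k\<le>n. fst (q k) = c (Suc k)"
      "0 \<le> snd (q n)" "snd (q n) \<le> 1"
      using Suc.IH[where c="\<lambda>k. c (Suc k)" and x=y] y(1) by auto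
    have y01: "0 \<le> y" "y \<le> 1" using Xs_sub[of n "\<lambda>k. c (Suc k)"] y(1) by auto
    have st0: "st (c 1, y) (c 0, x)" using y y01 by simp
    let ?p = "pcons (c 0, x) q"
    have "\<forall>k<Suc n. st (?p (Suc k)) (?p k)"
    proof (intro allI impI)
      fix k assume k: "k < Suc n"
      show "st (?p (Suc k)) (?p k)"
      proof (cases k)
        case 0 then show ?thesis using st0 q(1) by (simp add: pcons_def)
      next
        case (Suc k') then show ?thesis using q(2) k by (simp add: pcons_def)
      qed
    qed
    moreover have "\<forall>k\<le>Suc n. fst (?p k) = c k"
    proof (intro allI impI)
      fix k assume k: "k \<le> Suc n"
      show "fst (?p k) = c k"
      proof (cases k)
        case 0 then show ?thesis by (simp add: pcons_def)
      next
        case (Suc k') then show ?thesis using q(3) k by (simp add: pcons_def)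
      qed
    qed
    moreover have "?p 0 = (c 0, x)" by (simp add: pcons_def)
    moreover have "0 \<le> snd (?p (Suc n)) \<and> snd (?p (Suc n)) \<le> 1" using q(4,5) by (simp add: pcons_def)
    ultimately show "\<exists>p. p 0 = (c 0, x) \<and> (\<forall>k<Suc n. st (p (Suc k)) (p k)) \<and> (\<forall>k\<le>Suc n. fst (p k) = c k) \<and> 0 \<le> snd (p (Suc n)) \<and> snd (p (Suc n)) \<le> 1"
      by blast
  next
    assume "\<exists>p. p 0 = (c 0, x) \<and> (\<forall>k<Suc n. st (p (Suc k)) (p k)) \<and> (\<forall>k\<le>Suc n. fst (p k) = c k) \<and> 0 \<le> snd (p (Suc n)) \<and> snd (p (Suc n)) \<le> 1"
    then obtain p where p: "p 0 = (c 0, x)" "\<forall>k<Suc n. st (p (Suc k)) (p k)" "\<forall>k\<le>Suc n. fst (p k) = c k"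
      "0 \<le> snd (p (Suc n))" "snd (p (Suc n)) \<le> 1" by blast
    have f1: "fst (p 1) = c 1" using p(3) by simp
    obtain y where y: "p 1 = (c 1, y)" using f1 by (cases "p 1") simp
    have "st (p 1) (p 0)" using p(2) by simp
    then have st0: "st (c 1, y) (c 0, x)" using p(1) y by simp
    have "y \<in> Xs n (\<lambda>k. c (Suc k))"
      unfolding Suc.IH
    proof (rule exI[of _ "\<lambda>k. p (Suc k)"], intro conjI allI impI)
      show "p (Suc 0) = (c (Suc 0), y)" using y by simp
      show "st (p (Suc (Suc k))) (p (Suc k))" if "k < n" for k using p(2) that by simp
      show "fst (p (Suc k)) = c (Suc k)" if "k \<le> n" for k using p(3) that by simp
      show "0 \<le> snd (p (Suc n))" "snd (p (Suc n)) \<le> 1" using p(4,5) by auto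
    qed
    moreover have "Dm (c 1) (c 0) y" "x = Gm (c 1) (c 0) y" using st0 by auto
    ultimately show "x \<in> Xs (Suc n) c" by auto
  qed
qed

definition Cell :: "nat \<Rightarrow> 3 list \<Rightarrow> (real^3) set" where
  "Cell N c = {emb s | s. deep N s \<and> wd N s = c}"

lemma Cell_eq: "1 \<le> N \<Longrightarrow> length c = N \<Longrightarrow>
  Cell N c = (\<Union>l. (\<lambda>x. emb (c!0, x)) ` Xs N (\<lambda>k. if k < N then c!k else l))"
proof
  assume N: "1 \<le> N" and lc: "length c = N"
  show "Cell N c \<subseteq> (\<Union>l. (\<lambda>x. emb (c!0, x)) ` Xs N (\<lambda>k. if k < N then c!k else l))"
  proof
    fix v assume "v \<in> Cell N c"
    then obtain s where s: "v = emb s" "deep N s" "wd N s = c" unfolding Cell_def by blast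
    obtain p where p: "bp N s p" using s(2) unfolding deep_def by blast
    have sides: "\<forall>k<N. fst (p k) = c ! k" using wd_nth[OF p] s(3) by simp
    let ?l = "fst (p N)"
    let ?cf = "\<lambda>k. if k < N then c!k else ?l"
    have p0: "p 0 = s" using p unfolding bp_def by simp
    have fs: "fst s = c ! 0" using sides[rule_format, of 0] N p0 by simp
    have "snd s \<in> Xs N ?cf"
      unfolding Xs_char
    proof (rule exI[of _ p], intro conjI)
      have "(?cf 0, snd s) = s" using fs N by (simp add: prod_eq_iff)
      then show "p 0 = (?cf 0, snd s)" using p unfolding bp_def by simp
      show "\<forall>k<N. st (p (Suc k)) (p k)" using p unfolding bp_def by auto
      show "\<forall>k\<le>N. fst (p k) = ?cf k" using sides by (auto simp: le_less)
      have "N - 1 < N" "Suc (N - 1) = N" using N by auto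
      then have "st (p N) (p (N - 1))" using p unfolding bp_def by metis
      then show "0 \<le> snd (p N)" "snd (p N) \<le> 1" using st_src_bounds by blast+
    qed
    moreover have "v = emb (c!0, snd s)" using s(1) fs by (simp add: emb_def)
    ultimately show "v \<in> (\<Union>l. (\<lambda>x. emb (c!0, x)) ` Xs N (\<lambda>k. if k < N then c!k else l))" by blast
  qed
next
  assume N: "1 \<le> N" and lc: "length c = N"
  show "(\<Union>l. (\<lambda>x. emb (c!0, x)) ` Xs N (\<lambda>k. if k < N then c!k else l)) \<subseteq> Cell N c"
  proof
    fix v assume "v \<in> (\<Union>l. (\<lambda>x. emb (c!0, x)) ` Xs N (\<lambda>k. if k < N then c!k else l))"
    then obtain l x where x: "x \<in> Xs N (\<lambda>k. if k < N then c!k else l)" "v = emb (c!0, x)" by blast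
    obtain p where p: "p 0 = (c!0, x)" "\<forall>k<N. st (p (Suc k)) (p k)" "\<forall>k\<le>N. fst (p k) = (if k < N then c!k else l)"
      using x(1) N unfolding Xs_char by auto
    have b: "bp N (c!0, x) p" using p unfolding bp_def by auto
    have "wd N (c!0, x) = map (\<lambda>k. fst (p k)) [0..<N]" using wd_eq[OF b] .
    also have "\<dots> = c"
    proof (rule nth_equalityI)
      show "length (map (\<lambda>k. fst (p k)) [0..<N]) = length c" using lc by simp
      fix k assume "k < length (map (\<lambda>k. fst (p k)) [0..<N])"
      then have k: "k < N" by simp
      then show "map (\<lambda>k. fst (p k)) [0..<N] ! k = c ! k" using p(3) by simp
    qed
    finally have "wd N (c!0, x) = c" .
    moreover have "deep N (c!0, x)" using b unfolding deep_def by blast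
    ultimately show "v \<in> Cell N c" unfolding Cell_def using x(2) by blast
  qed
qed

lemma emb_cont: "continuous_on S (\<lambda>x. emb (i, x))"
proof -
  have eq: "(\<lambda>x. emb (i, x)) = (\<lambda>x. (1 - x) *\<^sub>R (axis (i+1) 1 :: real^3) + x *\<^sub>R axis (i+2) 1)"
    unfolding emb_def spt_def by simp
  show ?thesis unfolding eq by (intro continuous_intros)
qed

lemma Cell_closed: "1 \<le> N \<Longrightarrow> length c = N \<Longrightarrow> closed (Cell N c)"
proof -
  assume N: "1 \<le> N" "length c = N"
  have "\<And>l. compact ((\<lambda>x. emb (c!0, x)) ` Xs N (\<lambda>k. if k < N then c!k else l))"
    by (rule compact_continuous_image[OF emb_cont Xs_compact])
  then have "compact (\<Union>l. (\<lambda>x. emb (c!0, x)) ` Xs N (\<lambda>k. if k < N then c!k else l))"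
    by (intro compact_UN) auto
  then show ?thesis using Cell_eq[OF N] compact_imp_closed by simp
qed

end


lemma sgn_cases_real: "sgn (x::real) = -1 \<or> sgn x = 0 \<or> sgn x = 1"
  by (simp add: sgn_if)

locale sysW = sys +
  fixes w :: "nat \<Rightarrow> 3 \<times> real"
  assumes w0: "w 0 = (1, d 1)"
    and wst: "\<forall>n. st (w (Suc n)) (w n)"
    and winj: "inj w"
    and w23: "\<forall>n. w n \<noteq> (2, d 2) \<and> w n \<noteq> (3, d 3)"
    and F23: "\<forall>i. i \<noteq> 1 \<longrightarrow> (\<forall>Q. Q 0 = (i, d i) \<and> (\<forall>k. st (Q (Suc k)) (Q k)) \<longrightarrow>
               (\<exists>a b. 1 \<le> a \<and> a < b \<and> Q a = Q b))"
begin

abbreviation dp :: "3 \<Rightarrow> 3 \<times> real" where "dp i \<equiv> (i, d i)"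
abbreviation D :: "nat \<Rightarrow> 3 list" where "D N \<equiv> wd N (dp 1)"

lemma w_int: "0 < snd (w n) \<and> snd (w n) < 1"
  using st_int wst by blast

lemma bp_w: "bp N (w i) (\<lambda>k. w (i + k))"
  unfolding bp_def using wst by simp

lemma deep_w: "deep N (w i)"
  unfolding deep_def using bp_w by blast

lemma wd_w: "wd N (w i) = map (\<lambda>k. fst (w (i + k))) [0..<N]"
  using wd_eq[OF bp_w] .

lemma D_eq: "D N = map (\<lambda>k. fst (w k)) [0..<N]"
  using wd_w[of N 0] w0 by simp

lemma wd_w_nth: "k < N \<Longrightarrow> wd N (w i) ! k = fst (w (i + k))"
  using wd_w by simp

lemma spw: "\<forall>j\<le>B. fst (w j) = fst (w (j + r)) \<Longrightarrow> \<bar>snd (w 0) - snd (w r)\<bar> \<le> lam ^ B"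
proof -
  assume h: "\<forall>j\<le>B. fst (w j) = fst (w (j + r))"
  have step: "\<bar>snd (w j) - snd (w (j + r))\<bar> \<le> lam * \<bar>snd (w (Suc j)) - snd (w (Suc j + r))\<bar>" if j: "j < B" for j
  proof -
    have s1: "st (w (Suc j)) (w j)" and s2: "st (w (Suc j + r)) (w (j + r))"
      using wst by (simp, metis add_Suc)
    have f1: "fst (w (Suc j)) = fst (w (Suc j + r))" using h j by simp
    have f0: "fst (w j) = fst (w (j + r))" using h j by simp
    obtain i x where a: "w (Suc j) = (i,x)" by (cases "w (Suc j)")
    obtain x' where a': "w (Suc j + r) = (i,x')" using f1 a by (cases "w (Suc j + r)") auto
    obtain k y where b: "w j = (k,y)" by (cases "w j")
    obtain y' where b': "w (j + r) = (k,y')" using f0 b by (cases "w (j + r)") auto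
    show ?thesis using st_contr[of i x k y x' y'] s1 s2 a a' b b' by simp
  qed
  have "\<bar>snd (w 0) - snd (w r)\<bar> \<le> lam ^ j * \<bar>snd (w j) - snd (w (j + r))\<bar>" if "j \<le> B" for j
    using that
  proof (induction j)
    case 0 then show ?case by simp
  next
    case (Suc j)
    have "\<bar>snd (w 0) - snd (w r)\<bar> \<le> lam ^ j * \<bar>snd (w j) - snd (w (j + r))\<bar>" using Suc by simp
    also have "\<dots> \<le> lam ^ j * (lam * \<bar>snd (w (Suc j)) - snd (w (Suc j + r))\<bar>)"
      using step[of j] Suc.prems lam_pos by (intro mult_left_mono) auto
    finally show ?case by (simp add: ac_simps)
  qed
  from this[of B] have "\<bar>snd (w 0) - snd (w r)\<bar> \<le> lam ^ B * \<bar>snd (w B) - snd (w (B + r))\<bar>" by simp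
  also have "\<dots> \<le> lam ^ B * 1"
    using w_int[of B] w_int[of "B + r"] lam_pos by (intro mult_left_mono) auto
  finally show ?thesis by simp
qed

lemma spw_final: "\<forall>B. \<exists>r. 1 \<le> r \<and> r \<le> R \<and> (\<forall>j\<le>B. fst (w j) = fst (w (j + r))) \<Longrightarrow> False"
proof -
  assume h: "\<forall>B. \<exists>r. 1 \<le> r \<and> r \<le> R \<and> (\<forall>j\<le>B. fst (w j) = fst (w (j + r)))"
  have "\<exists>r. 1 \<le> r \<and> r \<le> R \<and> (\<forall>B. \<forall>j\<le>B. fst (w j) = fst (w (j + r)))"
  proof (rule ccontr)
    assume "\<not> ?thesis"
    then have "\<forall>r. \<exists>B. 1 \<le> r \<and> r \<le> R \<longrightarrow> \<not> (\<forall>j\<le>B. fst (w j) = fst (w (j + r)))" by blast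
    then obtain f where f: "\<And>r. 1 \<le> r \<Longrightarrow> r \<le> R \<Longrightarrow> \<not> (\<forall>j\<le>f r. fst (w j) = fst (w (j + r)))"
      by metis
    define B where "B = (\<Sum>r\<le>R. f r)"
    obtain r where r: "1 \<le> r" "r \<le> R" "\<forall>j\<le>B. fst (w j) = fst (w (j + r))" using h by blast
    have "f r \<le> B" unfolding B_def using r(2) by (intro member_le_sum) auto
    then have "\<forall>j\<le>f r. fst (w j) = fst (w (j + r))" using r(3) by auto
    then show False using f r by blast
  qed
  then obtain r where r: "1 \<le> r" "\<forall>B. \<forall>j\<le>B. fst (w j) = fst (w (j + r))" by blast
  have le: "\<bar>snd (w 0) - snd (w r)\<bar> \<le> lam ^ B" for B using spw r(2) by blast
  have "\<bar>snd (w 0) - snd (w r)\<bar> = 0"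
  proof (rule ccontr)
    assume "\<bar>snd (w 0) - snd (w r)\<bar> \<noteq> 0"
    then have pos: "\<bar>snd (w 0) - snd (w r)\<bar> > 0" by simp
    obtain B where "lam ^ B < \<bar>snd (w 0) - snd (w r)\<bar>"
      using real_arch_pow_inv[OF pos lam_lt1] by blast
    then show False using le[of B] by simp
  qed
  moreover have "fst (w 0) = fst (w r)" using r(2) by force
  ultimately have "w 0 = w r" by (simp add: prod_eq_iff)
  then show False using winj r(1) unfolding inj_def by fastforce
qed


lemma st_dom': "st a b \<Longrightarrow> (fst b = fst a + 1 \<and> snd a \<le> d (fst a)) \<or> (fst b = fst a + 2 \<and> d (fst a) \<le> snd a)"
  by (cases a; cases b) (auto simp: Dm_def)

lemma backseq: "\<forall>N. deep N s \<Longrightarrow> \<exists>Q. Q 0 = s \<and> (\<forall>k. st (Q (Suc k)) (Q k))"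
proof -
  assume h: "\<forall>N. deep N s"
  define P where "P N = (SOME p. bp N s p)" for N
  have P: "bp N s (P N)" for N unfolding P_def using h someI_ex unfolding deep_def by metis
  define Q where "Q k = P (Suc k) k" for k
  have "st (Q (Suc k)) (Q k)" for k
  proof -
    have "bp (Suc k) s (P (Suc (Suc k)))" using bp_mono[OF P[of "Suc (Suc k)"], of "Suc k"] by simp
    then have "P (Suc k) k = P (Suc (Suc k)) k" using bp_uniq[OF P[of "Suc k"], of _ k] by simp
    moreover have "st (P (Suc (Suc k)) (Suc k)) (P (Suc (Suc k)) k)" using P[of "Suc (Suc k)"] unfolding bp_def by simp
    ultimately show ?thesis unfolding Q_def by simp
  qed
  moreover have "Q 0 = s" using P[of 1] unfolding Q_def bp_def by simp
  ultimately show ?thesis by blast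
qed

lemma bseq_bp: "\<forall>k. st (Q (Suc k)) (Q k) \<Longrightarrow> bp N (Q 0) Q"
  unfolding bp_def by simp

lemma back_uniq: "\<forall>k. st (Q (Suc k)) (Q k) \<Longrightarrow> \<forall>k. st (Q' (Suc k)) (Q' k) \<Longrightarrow> Q 0 = Q' 0 \<Longrightarrow> Q k = Q' k"
proof -
  assume a: "\<forall>k. st (Q (Suc k)) (Q k)" "\<forall>k. st (Q' (Suc k)) (Q' k)" "Q 0 = Q' 0"
  have "bp (Suc k) (Q 0) Q" "bp (Suc k) (Q 0) Q'" using bseq_bp[OF a(1)] bseq_bp[OF a(2)] a(3) by auto
  then show ?thesis using bp_uniq by blast
qed

lemma bp_bseq: "\<forall>k. st (Q (Suc k)) (Q k) \<Longrightarrow> bp N (Q 0) p \<Longrightarrow> k < N \<Longrightarrow> p k = Q k"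
  using bp_uniq bseq_bp by blast

lemma shiftper: "\<forall>k. st (Q (Suc k)) (Q k) \<Longrightarrow> Q a = Q b \<Longrightarrow> Q (a + j) = Q (b + j)"
proof -
  assume a: "\<forall>k. st (Q (Suc k)) (Q k)" "Q a = Q b"
  have "\<forall>k. st ((\<lambda>k. Q (a + k)) (Suc k)) ((\<lambda>k. Q (a + k)) k)" using a(1) by simp
  moreover have "\<forall>k. st ((\<lambda>k. Q (b + k)) (Suc k)) ((\<lambda>k. Q (b + k)) k)" using a(1) by simp
  ultimately show ?thesis using back_uniq[of "\<lambda>k. Q (a + k)" "\<lambda>k. Q (b + k)"] a(2) by simp
qed

lemma epd: "\<forall>k. st (Q (Suc k)) (Q k) \<Longrightarrow> a < b \<Longrightarrow> Q a = Q b \<Longrightarrow>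
  (\<exists>r. 1 \<le> r \<and> r \<le> b \<and> Q r = Q 0) \<or>
  (\<exists>a' b'. 1 \<le> a' \<and> a' < b' \<and> b' \<le> b \<and> Q a' = Q b' \<and> Q (a' - 1) \<noteq> Q (b' - 1))"
proof (induction a arbitrary: b)
  case 0 then show ?case by (intro disjI1 exI[of _ b]) auto
next
  case (Suc a)
  show ?case
  proof (cases "Q a = Q (b - 1)")
    case True
    have "a < b - 1" using Suc.prems by simp
    from Suc.IH[OF Suc.prems(1) this True] show ?thesis by (meson diff_le_self le_trans)
  next
    case False
    then show ?thesis using Suc.prems by (intro disjI2 exI[of _ "Suc a"] exI[of _ b]) auto
  qed
qed

lemma exit_pt: "\<forall>k. st (Q (Suc k)) (Q k) \<Longrightarrow> 1 \<le> a' \<Longrightarrow> Q a' = Q b' \<Longrightarrow> 1 \<le> b' \<Longrightarrow>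
   Q (a' - 1) \<noteq> Q (b' - 1) \<Longrightarrow> snd (Q a') = d (fst (Q a')) \<and> fst (Q (a' - 1)) \<noteq> fst (Q (b' - 1))"
proof -
  assume a: "\<forall>k. st (Q (Suc k)) (Q k)" "1 \<le> a'" "Q a' = Q b'" "1 \<le> b'" "Q (a' - 1) \<noteq> Q (b' - 1)"
  have s1: "st (Q a') (Q (a' - 1))" using a(1)[rule_format, of "a' - 1"] a(2) by simp
  have s2: "st (Q a') (Q (b' - 1))" using a(1)[rule_format, of "b' - 1"] a(3,4) by simp
  show ?thesis using two_succ[OF s1 s2 a(5)] st_det[OF s1 s2] a(5) by auto
qed

lemma Da1: "i \<noteq> 1 \<Longrightarrow> \<exists>Ni. \<forall>N\<ge>Ni. deep N (dp i) \<longrightarrow>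
    (\<forall>p. bp N (dp i) p \<longrightarrow> (\<exists>k. 1 \<le> k \<and> k < N \<and> snd (p k) = d (fst (p k))))"
proof -
  assume i: "i \<noteq> 1"
  show ?thesis
  proof (cases "\<forall>N. deep N (dp i)")
    case False
    then obtain N1 where N1: "\<not> deep N1 (dp i)" by blast
    have "\<forall>N\<ge>N1. \<not> deep N (dp i)"
    proof (intro allI impI notI)
      fix N assume "N1 \<le> N" "deep N (dp i)"
      then show False using N1 deep_mono[of N "dp i" N1] by simp
    qed
    then show ?thesis by blast
  next
    case True
    obtain Q where Q: "Q 0 = dp i" "\<forall>k. st (Q (Suc k)) (Q k)" using backseq[OF True] by blast
    obtain a b where ab: "1 \<le> a" "a < b" "Q a = Q b" using F23 i Q by blast
    have "\<exists>k. 1 \<le> k \<and> k \<le> b \<and> snd (Q k) = d (fst (Q k))"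
    proof -
      from epd[OF Q(2) ab(2,3)] show ?thesis
      proof
        assume "\<exists>r. 1 \<le> r \<and> r \<le> b \<and> Q r = Q 0"
        then obtain r where "1 \<le> r" "r \<le> b" "Q r = Q 0" by blast
        then show ?thesis using Q(1) by (intro exI[of _ r]) auto
      next
        assume "\<exists>a' b'. 1 \<le> a' \<and> a' < b' \<and> b' \<le> b \<and> Q a' = Q b' \<and> Q (a' - 1) \<noteq> Q (b' - 1)"
        then obtain a' b' where e: "1 \<le> a'" "a' < b'" "b' \<le> b" "Q a' = Q b'" "Q (a' - 1) \<noteq> Q (b' - 1)" by blast
        have "snd (Q a') = d (fst (Q a'))" using exit_pt[OF Q(2) e(1) e(4) _ e(5)] e(1,2) by simp
        then show ?thesis using e by (intro exI[of _ a']) auto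
      qed
    qed
    then obtain k where k: "1 \<le> k" "k \<le> b" "snd (Q k) = d (fst (Q k))" by blast
    have "\<forall>N\<ge>Suc b. \<forall>p. bp N (dp i) p \<longrightarrow> (\<exists>k. 1 \<le> k \<and> k < N \<and> snd (p k) = d (fst (p k)))"
    proof (intro allI impI)
      fix N p assume N: "Suc b \<le> N" and p: "bp N (dp i) p"
      have "k < N" using k(2) N by simp
      then have "p k = Q k" using bp_bseq[OF Q(2), of N p k] p Q(1) by simp
      then show "\<exists>k. 1 \<le> k \<and> k < N \<and> snd (p k) = d (fst (p k))" using k N by (intro exI[of _ k]) auto
    qed
    then show ?thesis by blast
  qed
qed

definition N0 :: nat where
  "N0 = (SOME N0. \<forall>N\<ge>N0. \<forall>i. i \<noteq> 1 \<longrightarrow> deep N (dp i) \<longrightarrow>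
    (\<forall>p. bp N (dp i) p \<longrightarrow> (\<exists>k. 1 \<le> k \<and> k < N \<and> snd (p k) = d (fst (p k)))))"

lemma N0_prop:
  assumes a: "N0 \<le> N" "i \<noteq> 1" "bp N (dp i) p"
  shows "\<exists>k. 1 \<le> k \<and> k < N \<and> snd (p k) = d (fst (p k))"
proof -
  obtain N2 where N2: "\<forall>N\<ge>N2. deep N (dp 2) \<longrightarrow>
    (\<forall>p. bp N (dp 2) p \<longrightarrow> (\<exists>k. 1 \<le> k \<and> k < N \<and> snd (p k) = d (fst (p k))))"
    using Da1[of 2] by auto
  obtain N3 where N3: "\<forall>N\<ge>N3. deep N (dp 3) \<longrightarrow>
    (\<forall>p. bp N (dp 3) p \<longrightarrow> (\<exists>k. 1 \<le> k \<and> k < N \<and> snd (p k) = d (fst (p k))))"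
    using Da1[of 3] by auto
  have ex: "\<exists>N0. \<forall>N\<ge>N0. \<forall>i. i \<noteq> 1 \<longrightarrow> deep N (dp i) \<longrightarrow>
    (\<forall>p. bp N (dp i) p \<longrightarrow> (\<exists>k. 1 \<le> k \<and> k < N \<and> snd (p k) = d (fst (p k))))"
  proof (rule exI[of _ "max N2 N3"], intro allI impI)
    fix N i p assume "max N2 N3 \<le> N" "i \<noteq> 1" "deep N (dp i)" "bp N (dp i) p"
    then show "\<exists>k. 1 \<le> k \<and> k < N \<and> snd (p k) = d (fst (p k))"
      using N2 N3 three_cases[of i] by auto
  qed
  have "deep N (dp i)" using a(3) unfolding deep_def by blast
  have "\<forall>N\<ge>N0. \<forall>i. i \<noteq> 1 \<longrightarrow> deep N (dp i) \<longrightarrow>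
    (\<forall>p. bp N (dp i) p \<longrightarrow> (\<exists>k. 1 \<le> k \<and> k < N \<and> snd (p k) = d (fst (p k))))"
    using someI_ex[OF ex] unfolding N0_def .
  then show ?thesis using a \<open>deep N (dp i)\<close> by blast
qed

lemma notd: "deep N s \<Longrightarrow> wd N s \<noteq> D N \<Longrightarrow> s \<noteq> dp 2 \<Longrightarrow> s \<noteq> dp 3 \<Longrightarrow> snd s \<noteq> d (fst s)"
proof
  assume a: "deep N s" "wd N s \<noteq> D N" "s \<noteq> dp 2" "s \<noteq> dp 3" "snd s = d (fst s)"
  then have "s = dp (fst s)" by (simp add: prod_eq_iff)
  then show False using a three_cases[of "fst s"] by metis
qed

lemma BD: "N0 \<le> N \<Longrightarrow> 1 \<le> N \<Longrightarrow> deep N s \<Longrightarrow> deep N s' \<Longrightarrow> wd N s = wd N s' \<Longrightarrow> wd N s \<noteq> D N \<Longrightarrow>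
  s \<noteq> dp 2 \<Longrightarrow> s \<noteq> dp 3 \<Longrightarrow> s' \<noteq> dp 2 \<Longrightarrow> s' \<noteq> dp 3 \<Longrightarrow> st s t \<Longrightarrow> st s' t' \<Longrightarrow> fst t = fst t'"
proof (rule ccontr)
  assume N: "N0 \<le> N" "1 \<le> N" and dp: "deep N s" "deep N s'" and ww: "wd N s = wd N s'" "wd N s \<noteq> D N"
    and nd: "s \<noteq> dp 2" "s \<noteq> dp 3" "s' \<noteq> dp 2" "s' \<noteq> dp 3" and stt: "st s t" "st s' t'"
    and ne: "fst t \<noteq> fst t'"
  obtain p where p: "bp N s p" using dp unfolding deep_def by blast
  obtain p' where p': "bp N s' p'" using dp unfolding deep_def by blast
  have sides: "\<forall>k<N. fst (p k) = fst (p' k)" using wd_same[OF p p'] ww by simp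
  have fs: "fst s = fst s'" using sides N p p' unfolding bp_def by force
  define i where "i = fst s"
  have x1: "snd s \<noteq> d i" using notd[OF dp(1) ww(2) nd(1,2)] i_def by simp
  have x2: "snd s' \<noteq> d i" using notd[OF dp(2) _ nd(3,4)] ww i_def fs by simp
  have between: "(snd s < d i \<and> d i < snd s') \<or> (snd s' < d i \<and> d i < snd s)"
    using st_dom'[OF stt(1)] st_dom'[OF stt(2)] ne x1 x2 fs i_def by auto
  obtain N' where N': "N = Suc N'" using N(2) by (cases N) auto
  have "\<exists>P. bp N (fst s, d i) P \<and> (\<forall>k<N. fst (P k) = fst (p k))"
    using ivtw[of N' s p s' p' "d i"] p p' sides between N' by (auto simp: min_def max_def)
  then obtain P where P: "bp N (dp i) P" "\<forall>k<N. fst (P k) = fst (p k)" using i_def by auto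
  have wP: "wd N (dp i) = wd N s" using wd_same[OF P(1) p] P(2) by simp
  have i1: "i \<noteq> 1" using wP ww(2) by auto
  obtain k where k: "1 \<le> k" "k < N" "snd (P k) = d (fst (P k))" using N0_prop[OF N(1) i1 P(1)] by blast
  have sP: "\<forall>k<N. fst (p k) = fst (P k)" using P(2) by simp
  have sP': "\<forall>k<N. fst (p' k) = fst (P k)" using P(2) sides by simp
  have o1: "sgn (snd (p k) - snd (P k)) = (-1)^k * sgn (snd s - d i)"
    using ot[OF p P(1) sP k(2)] by simp
  have o2: "sgn (snd (p' k) - snd (P k)) = (-1)^k * sgn (snd s' - d i)"
    using ot[OF p' P(1) sP' k(2)] by simp
  have opp: "sgn (snd (p k) - snd (P k)) = - sgn (snd (p' k) - snd (P k))"
    using between o1 o2 by auto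
  have nz: "sgn (snd (p k) - snd (P k)) \<noteq> 0" using o1 between by auto
  have kk: "Suc (k - 1) = k" "k - 1 < N" using k by auto
  have st3: "st (p k) (p (k - 1))" "st (P k) (P (k - 1))" "st (p' k) (p' (k - 1))"
    using p P(1) p' kk unfolding bp_def by metis+
  have e1: "fst (p k) = fst (P k)" "fst (p' k) = fst (P k)" using sP sP' k by auto
  have e2: "fst (p (k - 1)) = fst (P (k - 1))" "fst (p' (k - 1)) = fst (P (k - 1))" using sP sP' k by auto
  have "(snd (p k) \<le> snd (P k) \<and> snd (p' k) \<le> snd (P k)) \<or> (snd (P k) \<le> snd (p k) \<and> snd (P k) \<le> snd (p' k))"
    using st_dom'[OF st3(1)] st_dom'[OF st3(2)] st_dom'[OF st3(3)] e1 e2 k(3) plus12_ne by auto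
  then show False using opp nz by (auto simp: sgn_if split: if_splits)
qed

end


lemma sgn_pos_transfer: "sgn (a::real) = sgn b \<Longrightarrow> 0 < b \<Longrightarrow> 0 < a"
  by (auto simp: sgn_if split: if_splits)
lemma sgn_neg_transfer: "sgn (a::real) = sgn b \<Longrightarrow> b < 0 \<Longrightarrow> a < 0"
  by (auto simp: sgn_if split: if_splits)

context sysW begin

lemma bp_d1: "bp N (dp 1) w"
  using bp_w[of N 0] w0 by simp

lemma deep_d1: "deep N (dp 1)"
  using bp_d1 unfolding deep_def by blast

lemma wd_head: "bp N s p \<Longrightarrow> 1 \<le> N \<Longrightarrow> wd N s ! 0 = fst s"
  using wd_nth[of N s p 0] unfolding bp_def by auto

lemma D_head: "1 \<le> N \<Longrightarrow> D N ! 0 = 1"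
  using wd_head[OF bp_d1] by simp

lemma words_fin: "finite {c :: 3 list. length c = N}"
  using finite_lists_length_eq[of "UNIV :: 3 set" N] by simp

lemma wsucc: "1 \<le> i \<Longrightarrow> wd N (w (i - 1)) = take N (fst (w (i - 1)) # wd N (w i))"
proof -
  assume i: "1 \<le> i"
  have "st (w i) (w (i - 1))" using wst[rule_format, of "i - 1"] i by simp
  then show ?thesis using wd_succ deep_w by blast
qed

lemma V_lemma:
  assumes N: "N0 \<le> N" "1 \<le> N" and beta: "\<beta> = 2 \<or> \<beta> = 3"
  shows "\<exists>i\<ge>1. wd N (w i) = D N \<and> fst (w (i - 1)) = \<beta>"
proof (rule ccontr)
  assume H: "\<not> ?thesis"
  define \<beta>' :: 3 where "\<beta>' = (if \<beta> = 2 then 3 else 2)"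
  have Hb: "fst (w (i - 1)) = \<beta>'" if i: "1 \<le> i" "wd N (w i) = D N" for i
  proof -
    have f1: "fst (w i) = 1" using wd_head[OF bp_w N(2), of i] D_head[OF N(2)] i(2) by simp
    have sw: "st (w i) (w (i - 1))" using wst[rule_format, of "i - 1"] i by simp
    have "fst (w (i - 1)) = 2 \<or> fst (w (i - 1)) = 3" using st_dom'[OF sw] f1 by auto
    moreover have "fst (w (i - 1)) \<noteq> \<beta>"
    proof
      assume "fst (w (i - 1)) = \<beta>"
      then have "\<exists>i\<ge>1. wd N (w i) = D N \<and> fst (w (i - 1)) = \<beta>" using i by blast
      then show False using H by simp
    qed
    ultimately show ?thesis using beta unfolding \<beta>'_def by auto
  qed
  define sel where "sel c = (SOME j. \<exists>i\<ge>1. wd N (w i) = c \<and> fst (w (i - 1)) = j)" for c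
  define F where "F c = (if c = D N then take N (\<beta>' # c) else take N (sel c # c))" for c
  have Fw: "wd N (w (i - 1)) = F (wd N (w i))" if i: "1 \<le> i" for i
  proof (cases "wd N (w i) = D N")
    case True
    then show ?thesis using wsucc[OF i] Hb[OF i True] unfolding F_def by simp
  next
    case False
    have ex: "\<exists>j. \<exists>i'\<ge>1. wd N (w i') = wd N (w i) \<and> fst (w (i' - 1)) = j" using i by blast
    obtain i' where i': "1 \<le> i'" "wd N (w i') = wd N (w i)" "fst (w (i' - 1)) = sel (wd N (w i))"
      using someI_ex[OF ex] unfolding sel_def by blast
    have s1: "st (w i) (w (i - 1))" using wst[rule_format, of "i - 1"] i by simp
    have s2: "st (w i') (w (i' - 1))" using wst[rule_format, of "i' - 1"] i' by simp
    have nd: "w i \<noteq> dp 2" "w i \<noteq> dp 3" "w i' \<noteq> dp 2" "w i' \<noteq> dp 3" using w23 by auto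
    have "fst (w (i - 1)) = fst (w (i' - 1))"
      using BD[OF N deep_w deep_w i'(2)[symmetric] False nd s1 s2] .
    then show ?thesis using wsucc[OF i] False i'(3) unfolding F_def by simp
  qed
  define K where "K = card {c :: 3 list. length c = N}"
  have per: "\<exists>r. 1 \<le> r \<and> r \<le> K \<and> (\<forall>j\<le>B. fst (w j) = fst (w (j + r)))" for B
  proof -
    let ?A = "{B..B + K}"
    have sub: "(\<lambda>i. wd N (w i)) ` ?A \<subseteq> {c. length c = N}" using wd_len[OF deep_w] by auto
    have "\<not> inj_on (\<lambda>i. wd N (w i)) ?A"
    proof
      assume "inj_on (\<lambda>i. wd N (w i)) ?A"
      then have "card ?A \<le> card {c :: 3 list. length c = N}" using card_inj_on_le[OF _ sub words_fin] by blast
      then show False unfolding K_def by simp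
    qed
    then obtain a b where ab: "a \<in> ?A" "b \<in> ?A" "a \<noteq> b" "wd N (w a) = wd N (w b)"
      unfolding inj_on_def by auto
    obtain a b where ab: "B \<le> a" "a < b" "b \<le> B + K" "wd N (w a) = wd N (w b)"
    proof (cases "a < b")
      case True then show ?thesis using ab that[of a b] by simp
    next
      case False then show ?thesis using ab that[of b a] by simp
    qed
    have eq: "wd N (w (a - t)) = wd N (w (b - t))" if "t \<le> a" for t
      using that
    proof (induction t)
      case 0 then show ?case using ab by simp
    next
      case (Suc t)
      have a1: "1 \<le> a - t" "1 \<le> b - t" using Suc.prems ab by auto
      have ih: "wd N (w (a - t)) = wd N (w (b - t))" using Suc.IH Suc.prems by simp
      have e1: "wd N (w (a - t - 1)) = F (wd N (w (a - t)))" using Fw[OF a1(1)] .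
      have e2: "wd N (w (b - t - 1)) = F (wd N (w (b - t)))" using Fw[OF a1(2)] .
      have e3: "a - Suc t = a - t - 1" "b - Suc t = b - t - 1" by simp_all
      show ?case unfolding e3 e1 e2 ih ..
    qed
    have "\<forall>j\<le>B. fst (w j) = fst (w (j + (b - a)))"
    proof (intro allI impI)
      fix j assume j: "j \<le> B"
      have "wd N (w (a - (a - j))) = wd N (w (b - (a - j)))" using eq[of "a - j"] by simp
      moreover have "a - (a - j) = j" "b - (a - j) = j + (b - a)" using j ab by auto
      ultimately have "wd N (w j) = wd N (w (j + (b - a)))" by simp
      then show "fst (w j) = fst (w (j + (b - a)))"
        using wd_head[OF bp_w N(2), of j] wd_head[OF bp_w N(2), of "j + (b - a)"] by simp
    qed
    then show ?thesis using ab by (intro exI[of _ "b - a"]) auto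
  qed
  then have "\<forall>B. \<exists>r. 1 \<le> r \<and> r \<le> K \<and> (\<forall>j\<le>B. fst (w j) = fst (w (j + r)))" by blast
  then show False using spw_final[of K] by simp
qed

lemma CYC:
  assumes Q: "\<forall>k. st (Q (Suc k)) (Q k)" and r: "1 \<le> r" "Q r = Q 0"
  shows "\<exists>N1. \<forall>N\<ge>N1. \<forall>k. wd N (Q k) \<noteq> D N"
proof (rule ccontr)
  assume H: "\<not> ?thesis"
  have per: "Q (j + r) = Q j" for j using shiftper[OF Q r(2), of j] by (simp add: add.commute)
  have "\<exists>r'. 1 \<le> r' \<and> r' \<le> r \<and> (\<forall>j\<le>B. fst (w j) = fst (w (j + r')))" for B
  proof -
    have H': "\<forall>N1. \<exists>N\<ge>N1. \<exists>k. wd N (Q k) = D N" using H by auto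
    obtain N k where Nk: "B + r + 1 \<le> N" "wd N (Q k) = D N" using H'[rule_format, of "B + r + 1"] by blast
    have bq: "bp N (Q k) (\<lambda>t. Q (k + t))" unfolding bp_def using Q by simp
    have sides: "\<forall>t<N. fst (Q (k + t)) = fst (w t)" using wd_same[OF bq bp_d1] Nk(2) by simp
    have "\<forall>j\<le>B. fst (w j) = fst (w (j + r))"
    proof (intro allI impI)
      fix j assume j: "j \<le> B"
      have "fst (w j) = fst (Q (k + j))" using sides j Nk(1) by simp
      also have "\<dots> = fst (Q (k + j + r))" using per[of "k + j"] by simp
      also have "\<dots> = fst (w (j + r))" using sides[rule_format, of "j + r"] j Nk(1) by (simp add: add.assoc)
      finally show "fst (w j) = fst (w (j + r))" .
    qed
    then show ?thesis using r by blast
  qed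
  then show False using spw_final[of r] by blast
qed

lemma SL:
  assumes Q: "\<forall>k. st (Q (Suc k)) (Q k)" and r: "1 \<le> r" "Q r = Q 0"
    and K: "1 \<le> K" "snd (Q K) = d (fst (Q K))"
    and y: "deep N y" "wd N y = wd N (Q K)" "y \<noteq> Q K" and N: "2 * r + 1 \<le> N"
    and t: "st y t"
  shows "fst t = fst (Q (K - 1))"
proof -
  have per: "Q (j + r) = Q j" for j using shiftper[OF Q r(2), of j] by (simp add: add.commute)
  obtain p where p: "bp N y p" using y(1) unfolding deep_def by blast
  have bq: "bp N (Q K) (\<lambda>j. Q (K + j))" unfolding bp_def using Q by simp
  have sides: "\<forall>j<N. fst (p j) = fst (Q (K + j))" using wd_same[OF p bq] y(2) by simp
  have fy: "fst y = fst (Q K)" using sides N p unfolding bp_def by force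
  have xne: "snd y \<noteq> snd (Q K)" using fy y(3) by (simp add: prod_eq_iff)
  have o: "sgn (snd (p (2*r)) - snd (Q (K + 2*r))) = (-1)^(2*r) * sgn (snd y - snd (Q K))"
    using ot[OF p bq sides] N by simp
  have q2: "Q (K + 2*r) = Q K" using per[of K] per[of "K + r"] by (simp add: mult_2 add.assoc)
  have q1: "Q (K + 2*r - 1) = Q (K - 1)"
  proof -
    have "K + 2*r - 1 = (K - 1) + r + r" using K(1) by simp
    then show ?thesis using per[of "K - 1"] per[of "K - 1 + r"] by simp
  qed
  have o': "sgn (snd (p (2*r)) - snd (Q K)) = sgn (snd y - snd (Q K))" using o q2 by simp
  have i2: "Suc (2*r - 1) = 2*r" "2*r - 1 < N" using r N by auto
  have st1: "st (p (2*r)) (p (2*r - 1))" using p i2 unfolding bp_def by metis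
  have st2: "st (Q K) (Q (K - 1))" using Q[rule_format, of "K - 1"] K(1) by simp
  have f1: "fst (p (2*r)) = fst (Q K)" using sides[rule_format, of "2*r"] q2 N by simp
  have f2: "fst (p (2*r - 1)) = fst (Q (K - 1))" using sides[rule_format, of "2*r - 1"] q1 i2 by simp
  define c where "c = fst (Q K)"
  consider "fst (Q (K - 1)) = c + 1" | "fst (Q (K - 1)) = c + 2" using st_dom'[OF st2] c_def by auto
  then show ?thesis
  proof cases
    case 1
    have "snd (p (2*r)) \<le> d c" using st_dom'[OF st1] f1 f2 1 c_def plus12_ne by auto
    then have "\<not> (0 < snd y - snd (Q K))" using sgn_pos_transfer[OF o'] K(2) c_def by auto
    then have "snd y < d c" using xne K(2) c_def by auto
    then have "fst t = c + 1" using st_dom'[OF t] fy c_def by auto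
    then show ?thesis using 1 by simp
  next
    case 2
    have "d c \<le> snd (p (2*r))" using st_dom'[OF st1] f1 f2 2 c_def plus12_ne by auto
    then have "\<not> (snd y - snd (Q K) < 0)" using sgn_neg_transfer[OF o'] K(2) c_def by auto
    then have "d c < snd y" using xne K(2) c_def by auto
    then have "fst t = c + 2" using st_dom'[OF t] fy c_def by auto
    then show ?thesis using 2 by simp
  qed
qed

end


context sysW begin

definition cw :: "3 \<times> real \<Rightarrow> bool" where
  "cw s \<longleftrightarrow> (\<forall>N. deep N s \<and> (\<exists>n. wd N (w n) = wd N s))"

lemma deep_bseq: "\<forall>k. st (Q (Suc k)) (Q k) \<Longrightarrow> deep N (Q k)"
proof -
  assume Q: "\<forall>k. st (Q (Suc k)) (Q k)"
  have "bp N (Q k) (\<lambda>j. Q (k + j))" unfolding bp_def using Q by simp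
  then show ?thesis unfolding deep_def by blast
qed

lemma PER:
  assumes cws: "cw s" and Q: "\<forall>k. st (Q (Suc k)) (Q k)" and Q0: "Q 0 = s" and r: "1 \<le> r" and Qr: "Q r = Q 0"
  shows False
proof -
  have per: "Q (j + r) = Q j" for j using shiftper[OF Q Qr, of j] by (simp add: add.commute)
  obtain N1 where N1: "\<forall>N\<ge>N1. \<forall>k. wd N (Q k) \<noteq> D N" using CYC[OF Q r Qr] by blast
  define N where "N = max (max N0 N1) (2 * r + 1)"
  have N: "N0 \<le> N" "N1 \<le> N" "2 * r + 1 \<le> N" "1 \<le> N" unfolding N_def by auto
  obtain kk where kk: "wd N (w kk) = wd N s" using cws unfolding cw_def by blast
  define K where "K t = (r - 1) * t + r" for t
  have K1: "1 \<le> K t" for t unfolding K_def using r by simp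
  have KS: "K t - 1 + r = K (Suc t)" for t unfolding K_def using r by (simp add: algebra_simps)
  have succ: "st (Q (K t)) (Q (K (Suc t)))" for t
  proof -
    have "st (Q (K t)) (Q (K t - 1))" using Q[rule_format, of "K t - 1"] K1[of t] by simp
    moreover have "Q (K t - 1) = Q (K (Suc t))" using per[of "K t - 1"] KS[of t] by simp
    ultimately show ?thesis by simp
  qed
  have Kpred: "Q (K t - 1) = Q (K (Suc t))" for t using per[of "K t - 1"] KS[of t] by simp
  have dq: "deep N (Q k)" for k using deep_bseq[OF Q] .
  have claim: "wd N (w (kk - t)) = wd N (Q (K t))" if "t \<le> kk" for t
    using that
  proof (induction t)
    case 0
    have "Q (K 0) = s" unfolding K_def using Qr Q0 by simp
    then show ?case using kk by simp
  next
    case (Suc t)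
    have ih: "wd N (w (kk - t)) = wd N (Q (K t))" using Suc by simp
    have ne: "wd N (Q (K t)) \<noteq> D N" using N1 N(2) by blast
    have s1: "st (w (kk - t)) (w (kk - Suc t))" using wst[rule_format, of "kk - Suc t"] Suc.prems
      by (simp add: Suc_diff_Suc)
    have s2: "st (Q (K t)) (Q (K (Suc t)))" using succ .
    have fe: "fst (w (kk - Suc t)) = fst (Q (K (Suc t)))"
    proof (cases "snd (Q (K t)) = d (fst (Q (K t)))")
      case True
      have "Q (K t) \<noteq> dp 1"
      proof
        assume "Q (K t) = dp 1" then show False using ne by simp
      qed
      then have "Q (K t) = dp 2 \<or> Q (K t) = dp 3" using True three_cases[of "fst (Q (K t))"]
        by (metis prod.collapse)
      then have wne: "w (kk - t) \<noteq> Q (K t)" using w23 by auto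
      have "fst (w (kk - Suc t)) = fst (Q (K t - 1))"
        using SL[OF Q r Qr K1[of t] True deep_w ih wne N(3) s1] .
      then show ?thesis using Kpred by simp
    next
      case False
      have nd: "Q (K t) \<noteq> dp 2" "Q (K t) \<noteq> dp 3" using False by auto
      have nw: "w (kk - t) \<noteq> dp 2" "w (kk - t) \<noteq> dp 3" using w23 by auto
      have ne': "wd N (w (kk - t)) \<noteq> D N" using ne ih by simp
      show ?thesis using BD[OF N(1) N(4) deep_w dq ih ne' nw nd s1 s2] .
    qed
    have "wd N (w (kk - Suc t)) = take N (fst (w (kk - Suc t)) # wd N (w (kk - t)))"
      using wd_succ[OF s1 deep_w] by simp
    also have "\<dots> = take N (fst (Q (K (Suc t))) # wd N (Q (K t)))" using fe ih by simp
    also have "\<dots> = wd N (Q (K (Suc t)))" using wd_succ[OF s2 dq] by simp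
    finally show ?case .
  qed
  have "wd N (w 0) = wd N (Q (K kk))" using claim[of kk] by simp
  moreover have "wd N (w 0) = D N" using w0 by simp
  ultimately show False using N1 N(2) by metis
qed

lemma TAIL:
  assumes cws: "cw s" and Q: "\<forall>k. st (Q (Suc k)) (Q k)" and Q0: "Q 0 = s"
    and ab: "1 \<le> a" "a < b" "Q a = Q b" "Q (a - 1) \<noteq> Q (b - 1)"
  shows False
proof -
  define N where "N = 2 * b - a + 1"
  obtain kk where kk: "wd N (w kk) = wd N s" using cws unfolding cw_def by blast
  have ep: "snd (Q a) = d (fst (Q a))" "fst (Q (a - 1)) \<noteq> fst (Q (b - 1))"
    using exit_pt[OF Q ab(1) ab(3) _ ab(4)] ab by auto
  have wb: "\<forall>k. st ((\<lambda>j. w (kk + j)) (Suc k)) ((\<lambda>j. w (kk + j)) k)" using wst by simp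
  show False
  proof (cases "w kk = s")
    case True
    have "w (kk + j) = Q j" for j using back_uniq[OF wb Q, of j] True Q0 by simp
    then have "w (kk + a) = w (kk + b)" using ab(3) by simp
    then show False using winj ab(2) unfolding inj_def by fastforce
  next
    case False
    have bpw: "bp N (w kk) (\<lambda>j. w (kk + j))" using bp_w .
    have bpq: "bp N s Q" using bseq_bp[OF Q] Q0 by simp
    have sides: "\<forall>j<N. fst (w (kk + j)) = fst (Q j)" using wd_same[OF bpw bpq] kk by simp
    have fs: "fst (w kk) = fst s" using sides[rule_format, of 0] Q0 unfolding N_def by simp
    have nz: "sgn (snd (w kk) - snd s) \<noteq> 0" using False fs by (auto simp: prod_eq_iff sgn_0_0)
    have q2: "Q (2 * b - a) = Q a"
    proof -
      have "Q (a + (b - a)) = Q (b + (b - a))" using shiftper[OF Q ab(3)] .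
      moreover have "a + (b - a) = b" "b + (b - a) = 2 * b - a" using ab by auto
      ultimately show ?thesis using ab(3) by simp
    qed
    have q1: "Q (2 * b - a - 1) = Q (b - 1)"
    proof -
      have "Q (a + (b - a - 1)) = Q (b + (b - a - 1))" using shiftper[OF Q ab(3)] .
      moreover have "a + (b - a - 1) = b - 1" "b + (b - a - 1) = 2 * b - a - 1" using ab by auto
      ultimately show ?thesis by simp
    qed
    have par: "(-1::real)^(2 * b - a) = (-1)^a"
    proof -
      have "2 * b - a = a + 2 * (b - a)" using ab by simp
      then show ?thesis by (simp add: power_add power_mult)
    qed
    have o1: "sgn (snd (w (kk + a)) - snd (Q a)) = (-1)^a * sgn (snd (w kk) - snd s)"
      using ot[OF bpw bpq sides, of a] ab unfolding N_def by simp
    have o2: "sgn (snd (w (kk + (2 * b - a))) - snd (Q (2 * b - a))) = (-1)^(2*b - a) * sgn (snd (w kk) - snd s)"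
      using ot[OF bpw bpq sides, of "2 * b - a"] unfolding N_def by simp
    define c where "c = fst (Q a)"
    define X1 where "X1 = snd (w (kk + a))"
    define X2 where "X2 = snd (w (kk + (2 * b - a)))"
    have sg: "sgn (X1 - d c) = sgn (X2 - d c)" using o1 o2 par q2 ep(1) unfolding X1_def X2_def c_def by simp
    have sgnz: "sgn (X1 - d c) \<noteq> 0" using o1 nz ep(1) unfolding X1_def c_def by simp
    have i1: "Suc (kk + a - 1) = kk + a" "Suc (kk + (2 * b - a) - 1) = kk + (2 * b - a)" using ab by auto
    have st1: "st (w (kk + a)) (w (kk + a - 1))" using wst[rule_format, of "kk + a - 1"] i1 by simp
    have st2: "st (w (kk + (2 * b - a))) (w (kk + (2 * b - a) - 1))"
      using wst[rule_format, of "kk + (2 * b - a) - 1"] i1 by simp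
    have f1: "fst (w (kk + a)) = c" using sides[rule_format, of a] ab unfolding N_def c_def by simp
    have f2: "fst (w (kk + (2 * b - a))) = c" using sides[rule_format, of "2 * b - a"] q2 unfolding N_def c_def by simp
    have g1: "fst (w (kk + a - 1)) = fst (Q (a - 1))" using sides[rule_format, of "a - 1"] ab unfolding N_def
      by (simp add: add_diff_assoc)
    have g2: "fst (w (kk + (2 * b - a) - 1)) = fst (Q (b - 1))"
      using sides[rule_format, of "2 * b - a - 1"] q1 ab unfolding N_def by (simp add: add_diff_assoc)
    have d1: "(fst (Q (a - 1)) = c + 1 \<and> X1 \<le> d c) \<or> (fst (Q (a - 1)) = c + 2 \<and> d c \<le> X1)"
      using st_dom'[OF st1] f1 g1 unfolding X1_def by simp
    have d2: "(fst (Q (b - 1)) = c + 1 \<and> X2 \<le> d c) \<or> (fst (Q (b - 1)) = c + 2 \<and> d c \<le> X2)"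
      using st_dom'[OF st2] f2 g2 unfolding X2_def by simp
    have "(X1 \<le> d c \<and> d c \<le> X2) \<or> (d c \<le> X1 \<and> X2 \<le> d c)" using d1 d2 ep(2) by auto
    then show False
    proof
      assume h: "X1 \<le> d c \<and> d c \<le> X2"
      show False
      proof (cases "X2 = d c")
        case True then show False using sg sgnz by simp
      next
        case False then have "0 < X2 - d c" using h by simp
        then have "0 < X1 - d c" using sgn_pos_transfer[OF sg] by simp
        then show False using h by simp
      qed
    next
      assume h: "d c \<le> X1 \<and> X2 \<le> d c"
      show False
      proof (cases "X2 = d c")
        case True then show False using sg sgnz by simp
      next
        case False then have "X2 - d c < 0" using h by simp
        then have "X1 - d c < 0" using sgn_neg_transfer[OF sg] by simp
        then show False using h by simp
      qed
    qed
  qed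
qed

lemma fwd_deep: "cw s \<Longrightarrow> \<zeta> 0 = s \<Longrightarrow> \<forall>n. st (\<zeta> n) (\<zeta> (Suc n)) \<Longrightarrow> deep N (\<zeta> n)"
proof (induction n)
  case 0 then show ?case unfolding cw_def by simp
next
  case (Suc n) then show ?case using wd_succ by blast
qed

lemma NOHIT:
  assumes cws: "cw s" and z0: "\<zeta> 0 = s" and zst: "\<forall>n. st (\<zeta> n) (\<zeta> (Suc n))"
  shows "\<zeta> n \<noteq> dp 2 \<and> \<zeta> n \<noteq> dp 3"
proof (rule ccontr)
  assume "\<not> ?thesis"
  then have "\<zeta> n = dp 2 \<or> \<zeta> n = dp 3" by simp
  then obtain i where i: "i \<noteq> 1" "\<zeta> n = dp i"
  proof
    assume "\<zeta> n = dp 2" then show ?thesis using that[of 2] by simp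
  next
    assume "\<zeta> n = dp 3" then show ?thesis using that[of 3] by simp
  qed
  have dz: "\<forall>N. deep N (\<zeta> n)" using fwd_deep[OF cws z0 zst] by blast
  obtain Q where Q: "Q 0 = \<zeta> n" "\<forall>k. st (Q (Suc k)) (Q k)" using backseq[OF dz] by blast
  have "\<exists>a b. 1 \<le> a \<and> a < b \<and> Q a = Q b" using F23[rule_format, OF i(1), of Q] i Q by simp
  then obtain a b where ab: "1 \<le> a" "a < b" "Q a = Q b" by blast
  have sint: "0 < snd s \<and> snd s < 1"
  proof -
    obtain p where "bp 1 s p" using cws unfolding cw_def deep_def by blast
    then show ?thesis using bp_int[of 1 s p 0] unfolding bp_def by auto
  qed
  have zint: "0 < snd (\<zeta> k) \<and> snd (\<zeta> k) < 1" for k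
  proof (cases k)
    case 0 then show ?thesis using sint z0 by simp
  next
    case (Suc k') then show ?thesis using st_int zst by blast
  qed
  have Qz: "Q t = \<zeta> (n - t)" if "t \<le> n" for t
    using that
  proof (induction t)
    case 0 then show ?case using Q by simp
  next
    case (Suc t)
    have e: "Suc (n - Suc t) = n - t" using Suc.prems by simp
    have s1: "st (Q (Suc t)) (Q t)" using Q by simp
    have s2: "st (\<zeta> (n - Suc t)) (\<zeta> (n - t))" using zst[rule_format, of "n - Suc t"] e by simp
    have qi: "0 < snd (Q (Suc t)) \<and> snd (Q (Suc t)) < 1" using st_int Q by blast
    show ?case using st_inj[OF s1 _ _ _ _ _, of "\<zeta> (n - Suc t)"] s2 Suc qi zint[of "n - Suc t"] by simp
  qed
  define Q' where "Q' j = Q (n + j)" for j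
  have Q': "\<forall>k. st (Q' (Suc k)) (Q' k)" unfolding Q'_def using Q by simp
  have Q'0: "Q' 0 = s" unfolding Q'_def using Qz[of n] z0 by simp
  have Q'ab: "Q' a = Q' b" unfolding Q'_def using shiftper[OF Q(2) ab(3), of n] by (simp add: add.commute)
  from epd[OF Q' ab(2) Q'ab] show False
  proof
    assume "\<exists>r. 1 \<le> r \<and> r \<le> b \<and> Q' r = Q' 0"
    then obtain r where "1 \<le> r" "Q' r = Q' 0" by blast
    then show False using PER[OF cws Q' Q'0] by blast
  next
    assume "\<exists>a' b'. 1 \<le> a' \<and> a' < b' \<and> b' \<le> b \<and> Q' a' = Q' b' \<and> Q' (a' - 1) \<noteq> Q' (b' - 1)"
    then obtain a' b' where "1 \<le> a'" "a' < b'" "Q' a' = Q' b'" "Q' (a' - 1) \<noteq> Q' (b' - 1)" by blast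
    then show False using TAIL[OF cws Q' Q'0] by blast
  qed
qed

end


context sysW begin

lemma M1:
  assumes cws: "cw s" and z0: "\<zeta> 0 = s" and zst: "\<forall>n. st (\<zeta> n) (\<zeta> (Suc n))"
    and m: "1 \<le> m" and per: "\<forall>n\<ge>M. fst (\<zeta> (n + m)) = fst (\<zeta> n)"
  shows False
proof -
  have zd: "deep N (\<zeta> n)" for N n using fwd_deep[OF cws z0 zst] .
  have znd: "\<zeta> n \<noteq> dp 2" "\<zeta> n \<noteq> dp 3" for n using NOHIT[OF cws z0 zst] by auto
  have zsucc: "wd N (\<zeta> (Suc n)) = take N (fst (\<zeta> (Suc n)) # wd N (\<zeta> n))" for N n
    using wd_succ[OF zst[rule_format, of n] zd] by simp
  have wn: "w i \<noteq> dp 2" "w i \<noteq> dp 3" for i using w23 by auto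
  have SH: "\<exists>t\<le>i. wd N (\<zeta> (n + t)) = D N"
    if N: "N0 \<le> N" "1 \<le> N" and e: "wd N (\<zeta> n) = wd N (w i)" for N n i
    using e
  proof (induction i arbitrary: n)
    case 0 then show ?case using w0 by (intro exI[of _ 0]) simp
  next
    case (Suc i)
    show ?case
    proof (cases "wd N (\<zeta> n) = D N")
      case True then show ?thesis by (intro exI[of _ 0]) simp
    next
      case False
      have s1: "st (\<zeta> n) (\<zeta> (Suc n))" using zst by simp
      have s2: "st (w (Suc i)) (w i)" using wst by simp
      have "fst (\<zeta> (Suc n)) = fst (w i)"
        using BD[OF N zd deep_w Suc.prems False znd(1) znd(2) wn(1) wn(2) s1 s2] .
      then have "wd N (\<zeta> (Suc n)) = wd N (w i)"
        using zsucc[of N n] wd_succ[OF s2 deep_w] Suc.prems by simp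
      then obtain t where "t \<le> i" "wd N (\<zeta> (Suc n + t)) = D N" using Suc.IH by blast
      then show ?thesis by (intro exI[of _ "Suc t"]) simp
    qed
  qed
  have visit0: "\<exists>n. wd N (\<zeta> n) = D N" if N: "N0 \<le> N" "1 \<le> N" for N
  proof -
    obtain k where "wd N (w k) = wd N s" using cws unfolding cw_def by blast
    then have "wd N (\<zeta> 0) = wd N (w k)" using z0 by simp
    then show ?thesis using SH[OF N] by blast
  qed
  have nextvisit: "\<exists>n'>n. wd N (\<zeta> n') = D N" if N: "N0 \<le> N" "1 \<le> N" and v: "wd N (\<zeta> n) = D N" for N n
  proof -
    obtain p where p: "bp N (\<zeta> n) p" using zd unfolding deep_def by blast
    have f1: "fst (\<zeta> n) = 1" using wd_head[OF p N(2)] v D_head[OF N(2)] by simp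
    have "fst (\<zeta> (Suc n)) = 2 \<or> fst (\<zeta> (Suc n)) = 3" using st_dom'[OF zst[rule_format, of n]] f1 by auto
    then obtain i where i: "1 \<le> i" "wd N (w i) = D N" "fst (w (i - 1)) = fst (\<zeta> (Suc n))"
      using V_lemma[OF N] by blast
    have "wd N (w (i - 1)) = take N (fst (w (i - 1)) # wd N (w i))" using wsucc[OF i(1)] .
    then have "wd N (\<zeta> (Suc n)) = wd N (w (i - 1))" using zsucc[of N n] v i by simp
    then obtain t where "wd N (\<zeta> (Suc n + t)) = D N" using SH[OF N] by blast
    then show ?thesis by (intro exI[of _ "Suc n + t"]) simp
  qed
  have visits: "\<exists>n\<ge>n0. wd N (\<zeta> n) = D N" if N: "N0 \<le> N" "1 \<le> N" for N n0
  proof (induction n0)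
    case 0 then show ?case using visit0[OF N] by blast
  next
    case (Suc n0)
    then obtain n where n: "n0 \<le> n" "wd N (\<zeta> n) = D N" by blast
    show ?case
    proof (cases "Suc n0 \<le> n")
      case True then show ?thesis using n by blast
    next
      case False
      obtain n' where "n' > n" "wd N (\<zeta> n') = D N" using nextvisit[OF N n(2)] by blast
      then show ?thesis using n by (intro exI[of _ n']) auto
    qed
  qed
  have "\<exists>r. 1 \<le> r \<and> r \<le> m \<and> (\<forall>j\<le>B. fst (w j) = fst (w (j + r)))" for B
  proof -
    define N where "N = max N0 (B + m + 1)"
    have N: "N0 \<le> N" "1 \<le> N" "B + m + 1 \<le> N" unfolding N_def by auto
    obtain n where n: "M + N \<le> n" "wd N (\<zeta> n) = D N" using visits[OF N(1,2), of "M + N"] by blast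
    have bz: "bp N (\<zeta> n) (\<lambda>k. \<zeta> (n - k))"
      unfolding bp_def
    proof (intro conjI allI impI)
      show "\<zeta> (n - 0) = \<zeta> n" by simp
      fix k assume k: "k < N"
      have "Suc (n - Suc k) = n - k" using k n(1) by simp
      then show "st (\<zeta> (n - Suc k)) (\<zeta> (n - k))" using zst[rule_format, of "n - Suc k"] by simp
    qed
    have sides: "\<forall>k<N. fst (\<zeta> (n - k)) = fst (w k)" using wd_same[OF bz bp_d1] n(2) by simp
    have "\<forall>j\<le>B. fst (w j) = fst (w (j + m))"
    proof (intro allI impI)
      fix j assume j: "j \<le> B"
      have "fst (w j) = fst (\<zeta> (n - j))" using sides j N(3) by simp
      also have "\<dots> = fst (\<zeta> (n - j - m))"
      proof -
        have "M \<le> n - j - m" using n(1) N(3) j by simp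
        then have "fst (\<zeta> (n - j - m + m)) = fst (\<zeta> (n - j - m))" using per by blast
        moreover have "n - j - m + m = n - j" using n(1) N(3) j by simp
        ultimately show ?thesis by simp
      qed
      also have "\<dots> = fst (w (j + m))" using sides[rule_format, of "j + m"] j N(3) by (simp add: diff_diff_add)
      finally show "fst (w j) = fst (w (j + m))" .
    qed
    then show ?thesis using m by blast
  qed
  then show False using spw_final[of m] by blast
qed

end


context sys begin

definition dec :: "real^3 \<Rightarrow> 3 \<times> real" where
  "dec v = (SOME s. 0 < snd s \<and> snd s < 1 \<and> emb s = v)"

lemma dec_emb: "0 < snd s \<Longrightarrow> snd s < 1 \<Longrightarrow> dec (emb s) = s"
proof -
  assume a: "0 < snd s" "snd s < 1"
  have ex: "\<exists>s'. 0 < snd s' \<and> snd s' < 1 \<and> emb s' = emb s" using a by blast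
  have b: "0 < snd (dec (emb s)) \<and> snd (dec (emb s)) < 1 \<and> emb (dec (emb s)) = emb s"
    unfolding dec_def using someI_ex[OF ex] .
  show ?thesis using emb_inj[OF a, of "dec (emb s)"] b by simp
qed

lemma phi_dec: "y \<in> phi \<rho> d z \<Longrightarrow> 0 < snd (dec y) \<and> snd (dec y) < 1 \<and> emb (dec y) = y"
proof -
  assume "y \<in> phi \<rho> d z"
  then obtain s t where st: "emb s = z" "st s t" "y = emb t" using phi_st by blast
  have "0 < snd t" "snd t < 1" using st_int[OF st(2)] by auto
  then show ?thesis using dec_emb st(3) by simp
qed

lemma traj_dec:
  assumes tr: "trajectory \<rho> d z" and s: "0 < snd s" "snd s < 1" "z 0 = emb s"
  defines "\<zeta> \<equiv> \<lambda>n. if n = 0 then s else dec (z n)"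
  shows "\<forall>n. st (\<zeta> n) (\<zeta> (Suc n))" and "\<forall>n. z n = emb (\<zeta> n) \<and> 0 < snd (\<zeta> n) \<and> snd (\<zeta> n) < 1"
proof -
  have zs: "z (Suc n) \<in> phi \<rho> d (z n)" for n using tr unfolding trajectory_def by blast
  show I: "\<forall>n. z n = emb (\<zeta> n) \<and> 0 < snd (\<zeta> n) \<and> snd (\<zeta> n) < 1"
  proof
    fix n show "z n = emb (\<zeta> n) \<and> 0 < snd (\<zeta> n) \<and> snd (\<zeta> n) < 1"
    proof (cases n)
      case 0 then show ?thesis using s unfolding \<zeta>_def by simp
    next
      case (Suc n') then show ?thesis using phi_dec[OF zs[of n']] unfolding \<zeta>_def by simp
    qed
  qed
  show "\<forall>n. st (\<zeta> n) (\<zeta> (Suc n))"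
  proof
    fix n
    have a: "z (Suc n) \<in> phi \<rho> d (emb (\<zeta> n))" using zs[of n] I by metis
    obtain t where t: "st (\<zeta> n) t" "z (Suc n) = emb t" using phi_int[OF _ _ a] I by blast
    have "t = \<zeta> (Suc n)"
      using emb_inj[of t "\<zeta> (Suc n)"] st_int[OF t(1)] I t(2) by (metis less_imp_le)
    then show "st (\<zeta> n) (\<zeta> (Suc n))" using t by simp
  qed
qed

lemma TRJ:
  assumes q: "\<forall>r<t. st (q r) (q (Suc r))" and qt: "0 \<le> snd (q t)" "snd (q t) \<le> 1"
  shows "\<exists>z. trajectory \<rho> d z \<and> (\<forall>r\<le>t. z r = emb (q r))"
proof -
  define fw where "fw = rec_nat (q t) (\<lambda>n b. SOME b'. st b b')"
  have fw0: "fw 0 = q t" and fwS: "fw (Suc n) = (SOME b'. st (fw n) b')" for n unfolding fw_def by simp_all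
  have fwb: "0 \<le> snd (fw n) \<and> snd (fw n) \<le> 1 \<and> st (fw n) (fw (Suc n))" for n
  proof (induction n)
    case 0
    obtain b where "st (q t) b" using st_exists[of "snd (q t)" "fst (q t)"] qt by auto
    then have "st (fw 0) (fw (Suc 0))" unfolding fwS fw0 by (rule someI)
    then show ?case using qt fw0 by simp
  next
    case (Suc n)
    have "0 < snd (fw (Suc n)) \<and> snd (fw (Suc n)) < 1" using st_int Suc by blast
    moreover obtain b where "st (fw (Suc n)) b" using st_exists[of "snd (fw (Suc n))" "fst (fw (Suc n))"] calculation by auto
    then have "st (fw (Suc n)) (fw (Suc (Suc n)))" unfolding fwS[of "Suc n"] by (rule someI)
    ultimately show ?case by simp
  qed
  define z where "z r = (if r \<le> t then emb (q r) else emb (fw (r - t)))" for r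
  have "z (Suc r) \<in> phi \<rho> d (z r)" for r
  proof (cases "Suc r \<le> t")
    case True then show ?thesis unfolding z_def using emb_st q by simp
  next
    case False
    show ?thesis
    proof (cases "r = t")
      case True
      then show ?thesis unfolding z_def using emb_st[OF fwb[of 0, THEN conjunct2, THEN conjunct2]] fw0 by simp
    next
      case False
      then have "r > t" using \<open>\<not> Suc r \<le> t\<close> by simp
      then have "Suc r - t = Suc (r - t)" by simp
      then show ?thesis unfolding z_def using emb_st[OF fwb[of "r - t", THEN conjunct2, THEN conjunct2]] \<open>r > t\<close> by simp
    qed
  qed
  then have "trajectory \<rho> d z" unfolding trajectory_def by blast
  moreover have "\<forall>r\<le>t. z r = emb (q r)" unfolding z_def by simp
  ultimately show ?thesis by blast
qed

lemma chain_pre: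
  assumes q: "\<forall>r<t. st (q r) (q (Suc r))" and t: "1 \<le> t"
  shows "emb (q 0) \<in> preimages \<rho> d (emb (q t))"
proof -
  have "st (q (t - 1)) (q t)" using q t by (metis Suc_diff_1 diff_less less_numeral_extra(1) order_less_le_trans)
  then have "0 \<le> snd (q t) \<and> snd (q t) \<le> 1" using st_int by (simp add: less_imp_le)
  then obtain z where z: "trajectory \<rho> d z" "\<forall>r\<le>t. z r = emb (q r)" using TRJ[OF q] by blast
  show ?thesis unfolding preimages_def using z t by (intro CollectI exI[of _ z] exI[of _ t]) auto
qed

end


context sys begin

primrec wch :: "nat \<Rightarrow> 3 \<times> real" where
  "wch 0 = (1, d 1)"
| "wch (Suc n) = (SOME a. st a (wch n) \<and> 0 < snd a \<and> snd a < 1)"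

definition good :: "nat \<Rightarrow> bool" where
  "good n \<longleftrightarrow> (\<forall>k<n. st (wch (Suc k)) (wch k) \<and> 0 < snd (wch (Suc k)) \<and> snd (wch (Suc k)) < 1)"

definition Vset :: "(real^3) set" where
  "Vset = range (\<lambda>i. emb (i, 0)) \<union> range (\<lambda>i. emb (i, 1))"

lemma Vset_fin: "finite Vset" unfolding Vset_def by simp

lemma good_mono: "good n \<Longrightarrow> m \<le> n \<Longrightarrow> good m"
  unfolding good_def by auto

lemma d1_int: "0 < snd (1::3, d 1) \<and> snd (1::3, d 1) < 1" using d_pos d_lt1 by simp

lemma PREIM:
  assumes v: "v \<in> preimages \<rho> d (emb (1, d 1))"
  shows "\<exists>t\<ge>1. good (t - 1) \<and> ((good t \<and> v = emb (wch t)) \<or>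
     (v \<in> Vset \<and> wch (t - 1) = (fst (wch (t - 1)), gm (fst (wch (t - 1)) + 2) 0)))"
proof -
  obtain z t where z: "trajectory \<rho> d z" "z 0 = v" "1 \<le> t" "z t = emb (1, d 1)"
    using v unfolding preimages_def by blast
  have zs: "z (Suc r) \<in> phi \<rho> d (z r)" for r using z(1) unfolding trajectory_def by blast
  have zi: "0 < snd (dec (z r)) \<and> snd (dec (z r)) < 1 \<and> emb (dec (z r)) = z r" if "1 \<le> r" for r
    using phi_dec[OF zs[of "r - 1"]] that by simp
  have zst: "st (dec (z r)) (dec (z (Suc r)))" if r: "1 \<le> r" for r
  proof -
    have a: "z (Suc r) \<in> phi \<rho> d (emb (dec (z r)))" using zs[of r] zi[OF r] by simp
    obtain t' where t': "st (dec (z r)) t'" "z (Suc r) = emb t'" using phi_int[OF _ _ a] zi[OF r] by blast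
    have "t' = dec (z (Suc r))" using dec_emb[of t'] st_int[OF t'(1)] t'(2) by simp
    then show ?thesis using t' by simp
  qed
  have zt: "dec (z t) = (1, d 1)" using z(4) dec_emb[of "(1::3, d 1)"] d1_int by simp
  have claim: "wch k = dec (z (t - k)) \<and> good k" if "k \<le> t - 1" for k
    using that
  proof (induction k)
    case 0 then show ?case using zt by (simp add: good_def)
  next
    case (Suc k)
    have ih: "wch k = dec (z (t - k))" "good k" using Suc by auto
    define a where "a = dec (z (t - Suc k))"
    have r1: "1 \<le> t - Suc k" using Suc.prems by simp
    have e: "Suc (t - Suc k) = t - k" using Suc.prems by simp
    have sa: "st a (wch k)" using zst[OF r1] e ih unfolding a_def by simp
    have ia: "0 < snd a \<and> snd a < 1" using zi[OF r1] unfolding a_def by simp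
    have ex: "\<exists>a. st a (wch k) \<and> 0 < snd a \<and> snd a < 1" using sa ia by blast
    have ws: "st (wch (Suc k)) (wch k) \<and> 0 < snd (wch (Suc k)) \<and> snd (wch (Suc k)) < 1"
      using someI_ex[OF ex] by simp
    have "wch (Suc k) = a" using st_inj[of "wch (Suc k)" "wch k" a] ws sa ia by simp
    moreover have "good (Suc k)"
      unfolding good_def
    proof (intro allI impI)
      fix j assume j: "j < Suc k"
      show "st (wch (Suc j)) (wch j) \<and> 0 < snd (wch (Suc j)) \<and> snd (wch (Suc j)) < 1"
      proof (cases "j < k")
        case True then show ?thesis using ih(2) unfolding good_def by blast
      next
        case False then have "j = k" using j by simp
        then show ?thesis using ws by simp
      qed
    qed
    ultimately show ?case unfolding a_def by simp
  qed
  obtain s0 t0 where s0: "emb s0 = v" "st s0 t0" "z 1 = emb t0" using phi_st[OF zs[of 0]] z(2) by auto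
  have t0: "t0 = dec (z 1)" using dec_emb[of t0] st_int[OF s0(2)] s0(3) by simp
  have wt1: "wch (t - 1) = t0" "good (t - 1)" using claim[of "t - 1"] z(3) t0 by auto
  show ?thesis
  proof (cases "0 < snd s0 \<and> snd s0 < 1")
    case True
    have ex: "\<exists>a. st a (wch (t - 1)) \<and> 0 < snd a \<and> snd a < 1" using True s0(2) wt1 by blast
    have tt: "t = Suc (t - 1)" using z(3) by simp
    have "wch (Suc (t - 1)) = (SOME a. st a (wch (t - 1)) \<and> 0 < snd a \<and> snd a < 1)" by simp
    then have "st (wch (Suc (t - 1))) (wch (t - 1)) \<and> 0 < snd (wch (Suc (t - 1))) \<and> snd (wch (Suc (t - 1))) < 1"
      using someI_ex[OF ex] by simp
    then have ws: "st (wch t) (wch (t - 1)) \<and> 0 < snd (wch t) \<and> snd (wch t) < 1"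
      using tt by metis
    have "wch t = s0" using st_inj[of "wch t" "wch (t - 1)" s0] ws s0(2) wt1 True by simp
    moreover have "good t"
      unfolding good_def
    proof (intro allI impI)
      fix k assume k: "k < t"
      show "st (wch (Suc k)) (wch k) \<and> 0 < snd (wch (Suc k)) \<and> snd (wch (Suc k)) < 1"
      proof (cases "k < t - 1")
        case True then show ?thesis using wt1(2) unfolding good_def by blast
      next
        case False then have "k = t - 1" using k by simp
        then show ?thesis using ws tt by simp
      qed
    qed
    ultimately show ?thesis using s0(1) z(3) wt1 by auto
  next
    case False
    have b: "0 \<le> snd s0" "snd s0 \<le> 1" using st_src_bounds[OF s0(2)] by auto
    then have x01: "snd s0 = 0 \<or> snd s0 = 1" using False by auto
    have "s0 = (fst s0, snd s0)" by simp
    then have "st (fst s0, snd s0) t0" using s0(2) by simp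
    from vert_succ[OF this x01] have "t0 = (fst t0, gm (fst t0 + 2) 0)" .
    moreover have "v \<in> Vset"
    proof -
      have e: "v = emb (fst s0, snd s0)" using s0(1) by simp
      from x01 show ?thesis
      proof
        assume "snd s0 = 0" then have "v = emb (fst s0, 0)" using e by simp
        then show ?thesis unfolding Vset_def by blast
      next
        assume "snd s0 = 1" then have "v = emb (fst s0, 1)" using e by simp
        then show ?thesis unfolding Vset_def by blast
      qed
    qed
    ultimately show ?thesis using wt1 z(3) by auto
  qed
qed

lemma all_good:
  assumes inf: "infinite (preimages \<rho> d (emb (1, d 1)))"
  shows "good n"
proof (rule ccontr)
  assume ng: "\<not> good n"
  have "preimages \<rho> d (emb (1, d 1)) \<subseteq> emb ` wch ` {..n} \<union> Vset"
  proof
    fix v assume v: "v \<in> preimages \<rho> d (emb (1, d 1))"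
    obtain t where t: "1 \<le> t" "good (t - 1)" "(good t \<and> v = emb (wch t)) \<or> v \<in> Vset"
      using PREIM[OF v] by blast
    have "t - 1 < n"
    proof (rule ccontr)
      assume "\<not> t - 1 < n" then have "n \<le> t - 1" by simp
      then show False using good_mono[OF t(2)] ng by blast
    qed
    then have "t \<le> n" by simp
    then show "v \<in> emb ` wch ` {..n} \<union> Vset" using t(3) by auto
  qed
  moreover have "finite (emb ` wch ` {..n} \<union> Vset)" using Vset_fin by simp
  ultimately show False using inf finite_subset by blast
qed

lemma wch_st: "infinite (preimages \<rho> d (emb (1, d 1))) \<Longrightarrow> st (wch (Suc k)) (wch k) \<and> 0 < snd (wch (Suc k)) \<and> snd (wch (Suc k)) < 1"
  using all_good[of "Suc k"] unfolding good_def by blast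

lemma wch_int: "infinite (preimages \<rho> d (emb (1, d 1))) \<Longrightarrow> 0 < snd (wch k) \<and> snd (wch k) < 1"
  using wch_st st_int by blast

lemma novert:
  assumes inf: "infinite (preimages \<rho> d (emb (1, d 1)))" and v: "v \<in> preimages \<rho> d (emb (1, d 1))"
  shows "v \<in> emb ` range wch"
proof -
  obtain t where t: "1 \<le> t" "(good t \<and> v = emb (wch t)) \<or> (v \<in> Vset \<and> wch (t - 1) = (fst (wch (t - 1)), gm (fst (wch (t - 1)) + 2) 0))"
    using PREIM[OF v] by blast
  show ?thesis
  proof (cases "v = emb (wch t)")
    case True then show ?thesis by blast
  next
    case False
    then have e: "wch (t - 1) = (fst (wch (t - 1)), gm (fst (wch (t - 1)) + 2) 0)" using t by auto
    have "st (wch t) (wch (t - 1))" using wch_st[OF inf, of "t - 1"] t(1) by simp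
    then have "st (wch t) (fst (wch (t - 1)), gm (fst (wch (t - 1)) + 2) 0)" using e by simp
    then have "snd (wch t) = 0 \<or> snd (wch t) = 1" by (rule mid_no_int_pred)
    then show ?thesis using wch_int[OF inf, of t] by auto
  qed
qed

lemma wch_inj:
  assumes inf: "infinite (preimages \<rho> d (emb (1, d 1)))"
  shows "inj wch"
proof (rule ccontr)
  assume "\<not> inj wch"
  then obtain a b where ab0: "a \<noteq> b" "wch a = wch b" unfolding inj_def by blast
  obtain a b where ab: "a < b" "wch a = wch b"
  proof (cases "a < b")
    case True then show ?thesis using ab0 that[of a b] by simp
  next
    case False then show ?thesis using ab0 that[of b a] by simp
  qed
  have sh: "wch (a + j) = wch (b + j)" for j
  proof (induction j)
    case 0 then show ?case using ab by simp
  next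
    case (Suc j)
    have "st (wch (Suc (a + j))) (wch (a + j))" "st (wch (Suc (b + j))) (wch (b + j))"
      using wch_st[OF inf] by auto
    then show ?case using st_inj[of "wch (Suc (a + j))" "wch (a + j)" "wch (Suc (b + j))"] Suc wch_int[OF inf] by simp
  qed
  have fin: "wch n \<in> wch ` {..<b}" for n
  proof (induction n rule: less_induct)
    case (less n)
    show ?case
    proof (cases "n < b")
      case True then show ?thesis by simp
    next
      case False
      have "wch n = wch (a + (n - b))" using sh[of "n - b"] False by simp
      moreover have "a + (n - b) < n" using False ab by simp
      ultimately show ?thesis using less by simp
    qed
  qed
  have "preimages \<rho> d (emb (1, d 1)) \<subseteq> emb ` wch ` {..<b}"
  proof
    fix v assume "v \<in> preimages \<rho> d (emb (1, d 1))"
    then obtain n where "v = emb (wch n)" using novert[OF inf] by blast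
    then show "v \<in> emb ` wch ` {..<b}" using fin[of n] by blast
  qed
  then show False using inf finite_subset by blast
qed

lemma inf_chain_pre:
  assumes Q: "\<forall>k. st (Q (Suc k)) (Q k)" and k: "1 \<le> k"
  shows "emb (Q (n + k)) \<in> preimages \<rho> d (emb (Q n))"
proof -
  define q where "q r = Q (n + k - r)" for r
  have "\<forall>r<k. st (q r) (q (Suc r))"
  proof (intro allI impI)
    fix r assume r: "r < k"
    have "n + k - r = Suc (n + k - Suc r)" using r by simp
    then show "st (q r) (q (Suc r))" unfolding q_def using Q by metis
  qed
  from chain_pre[OF this k] show ?thesis unfolding q_def by simp
qed

lemma F23':
  assumes fin: "finite (preimages \<rho> d (emb (Q 0)))" and Q: "\<forall>k. st (Q (Suc k)) (Q k)"
  shows "\<exists>a b. 1 \<le> a \<and> a < b \<and> Q a = Q b"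
proof (rule ccontr)
  assume H: "\<not> ?thesis"
  have Qi: "0 < snd (Q k) \<and> snd (Q k) < 1" for k using st_int Q by blast
  have "inj_on (\<lambda>k. emb (Q k)) {1..}"
  proof (rule inj_onI)
    fix a b assume a: "a \<in> {1..}" "b \<in> {1..}" "emb (Q a) = emb (Q b)"
    have "Q a = Q b" using emb_inj[of "Q a" "Q b"] Qi[of a] Qi[of b] a(3) by simp
    show "a = b"
    proof (rule ccontr)
      assume "a \<noteq> b"
      then have "a < b \<or> b < a" by arith
      then show False
      proof
        assume "a < b" then show False using H \<open>Q a = Q b\<close> a(1) by auto
      next
        assume "b < a"
        moreover have "Q b = Q a" using \<open>Q a = Q b\<close> by simp
        ultimately show False using H a(2) by auto
      qed
    qed
  qed
  then have "infinite ((\<lambda>k. emb (Q k)) ` {1..})"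
  proof -
    assume i: "inj_on (\<lambda>k. emb (Q k)) {1..}"
    show ?thesis
    proof
      assume "finite ((\<lambda>k. emb (Q k)) ` {1..})"
      then have "finite ({1..} :: nat set)" using finite_imageD[OF _ i] by blast
      then show False using infinite_Ici[of "1::nat"] by simp
    qed
  qed
  moreover have "(\<lambda>k. emb (Q k)) ` {1..} \<subseteq> preimages \<rho> d (emb (Q 0))"
    using inf_chain_pre[OF Q, of _ 0] by auto
  ultimately show False using fin finite_subset by blast
qed

lemma wch_nd:
  assumes inf: "infinite (preimages \<rho> d (emb (1, d 1)))" and fin: "finite (preimages \<rho> d (emb (i, d i)))"
  shows "wch n \<noteq> (i, d i)"
proof
  assume e: "wch n = (i, d i)"
  define Q where "Q k = wch (n + k)" for k
  have Q: "\<forall>k. st (Q (Suc k)) (Q k)" unfolding Q_def using wch_st[OF inf] by simp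
  have "finite (preimages \<rho> d (emb (Q 0)))" using fin e unfolding Q_def by simp
  then obtain a b where "1 \<le> a" "a < b" "Q a = Q b" using F23'[OF _ Q] by blast
  then have "wch (n + a) = wch (n + b)" "n + a \<noteq> n + b" unfolding Q_def by auto
  then show False using wch_inj[OF inf] unfolding inj_def by blast
qed

end


context sysW begin

lemma CL1:
  assumes u: "u \<in> closure (emb ` range w)" and N: "1 \<le> N"
  shows "\<exists>s. deep N s \<and> emb s = u \<and> (\<exists>n. wd N (w n) = wd N s)"
proof -
  define T where "T = (\<Union>c\<in>{c. length c = N \<and> (\<exists>n. emb (w n) \<in> Cell N c)}. Cell N c)"
  have cT: "closed T" unfolding T_def
    by (rule closed_UN) (use words_fin Cell_closed[OF N] in auto)
  have sub: "emb ` range w \<subseteq> T"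
  proof
    fix v assume "v \<in> emb ` range w"
    then obtain n where v: "v = emb (w n)" by blast
    have "v \<in> Cell N (wd N (w n))" unfolding Cell_def v using deep_w by blast
    moreover have "length (wd N (w n)) = N" using wd_len[OF deep_w] .
    ultimately show "v \<in> T" unfolding T_def using v by blast
  qed
  have "u \<in> T" using closure_minimal[OF sub cT] u by blast
  then obtain c n where c: "length c = N" "emb (w n) \<in> Cell N c" "u \<in> Cell N c" unfolding T_def by blast
  obtain s where s: "deep N s" "wd N s = c" "emb s = u" using c(3) unfolding Cell_def by blast
  obtain s' where s'0: "emb (w n) = emb s'" "deep N s'" "wd N s' = c" using c(2) unfolding Cell_def by blast
  have s': "deep N s'" "wd N s' = c" "emb s' = emb (w n)" using s'0 by auto
  obtain p where p: "bp N s' p" using s'(1) unfolding deep_def by blast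
  have "0 < snd s' \<and> snd s' < 1" using bp_int[OF p, of 0] N p unfolding bp_def by auto
  then have "s' = w n" using emb_inj[of s' "w n"] s'(3) w_int[of n] by simp
  then show ?thesis using s s' by metis
qed

lemma CL:
  assumes u: "u \<in> closure (emb ` range w)"
  shows "\<exists>s. 0 < snd s \<and> snd s < 1 \<and> emb s = u \<and> cw s"
proof -
  obtain s where s: "deep 1 s" "emb s = u" using CL1[OF u, of 1] by auto
  obtain p where p: "bp 1 s p" using s(1) unfolding deep_def by blast
  have si: "0 < snd s \<and> snd s < 1" using bp_int[OF p, of 0] p unfolding bp_def by auto
  have "deep N s \<and> (\<exists>n. wd N (w n) = wd N s)" for N
  proof (cases "N = 0")
    case True
    have b0: "bp 0 s (\<lambda>_. s)" unfolding bp_def by simp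
    have "wd 0 s = []" "wd 0 (w 0) = []" using wd_eq[OF b0] wd_eq[OF bp_w[of 0 0]] by auto
    then show ?thesis using b0 True unfolding deep_def by auto
  next
    case False
    then obtain s' where s': "deep N s'" "emb s' = u" "\<exists>n. wd N (w n) = wd N s'" using CL1[OF u, of N] by auto
    obtain p' where p': "bp N s' p'" using s'(1) unfolding deep_def by blast
    have "0 < snd s' \<and> snd s' < 1" using bp_int[OF p', of 0] False p' unfolding bp_def by auto
    then have "s' = s" using emb_inj[of s' s] s'(2) s(2) si by simp
    then show ?thesis using s' by simp
  qed
  then show ?thesis using s si unfolding cw_def by blast
qed

end

theorem lemma5p3:
  fixes \<rho> d :: "3 \<Rightarrow> real" and u :: "real^3"
  assumes rho_range: "\<forall>i. 0 < \<rho> i \<and> \<rho> i < 1"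
    and rho_sum: "\<rho> 1 + \<rho> 2 + \<rho> 3 > 1"
    and rho_pair: "\<forall>i j. i \<noteq> j \<longrightarrow> \<rho> i + \<rho> j \<le> 1"
    and d_range: "\<forall>i. 0 < d i \<and> d i < 1"
    and inf1: "infinite (preimages \<rho> d (spt (d 1) 1))"
    and fin2: "finite (preimages \<rho> d (spt (d 2) 2))"
    and fin3: "finite (preimages \<rho> d (spt (d 3) 3))"
    and u_in: "u \<in> closure (P1 \<rho> d)"
  shows "\<not> in_periodic_orbit \<rho> d u \<and>
         (\<forall>z. trajectory \<rho> d z \<and> z 0 = u \<longrightarrow> \<not> eventually_periodic z)"
proof -
  interpret S: sys \<rho> d using rho_range rho_sum rho_pair d_range by unfold_locales
  have embd: "S.emb (i, d i) = spt (d i) i" for i unfolding S.emb_def by simp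
  have inf: "infinite (preimages \<rho> d (S.emb (1, d 1)))" using inf1 embd by simp
  have f2: "finite (preimages \<rho> d (S.emb (2, d 2)))" using fin2 embd by simp
  have f3: "finite (preimages \<rho> d (S.emb (3, d 3)))" using fin3 embd by simp
  have F23: "\<forall>i. i \<noteq> 1 \<longrightarrow> (\<forall>Q. Q 0 = (i, d i) \<and> (\<forall>k. S.st (Q (Suc k)) (Q k)) \<longrightarrow>
               (\<exists>a b. 1 \<le> a \<and> a < b \<and> Q a = Q b))"
  proof (intro allI impI, elim conjE)
    fix i :: 3 and Q assume i: "i \<noteq> 1" and Q0: "Q 0 = (i, d i)" and Q: "\<forall>k. S.st (Q (Suc k)) (Q k)"
    have "i = 2 \<or> i = 3" using i three_cases[of i] by auto
    then have "finite (preimages \<rho> d (S.emb (Q 0)))" using f2 f3 Q0 by auto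
    then show "\<exists>a b. 1 \<le> a \<and> a < b \<and> Q a = Q b" using S.F23'[OF _ Q] by blast
  qed
  interpret W: sysW \<rho> d S.wch
  proof unfold_locales
    show "S.wch 0 = (1, d 1)" by simp
    show "\<forall>n. S.st (S.wch (Suc n)) (S.wch n)" using S.wch_st[OF inf] by blast
    show "inj S.wch" using S.wch_inj[OF inf] .
    show "\<forall>n. S.wch n \<noteq> (2, d 2) \<and> S.wch n \<noteq> (3, d 3)" using S.wch_nd[OF inf f2] S.wch_nd[OF inf f3] by blast
    show "\<forall>i. i \<noteq> 1 \<longrightarrow> (\<forall>Q. Q 0 = (i, d i) \<and> (\<forall>k. S.st (Q (Suc k)) (Q k)) \<longrightarrow>
               (\<exists>a b. 1 \<le> a \<and> a < b \<and> Q a = Q b))" using F23 .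
  qed
  have P1sub: "P1 \<rho> d \<subseteq> S.emb ` range S.wch"
  proof
    fix v assume "v \<in> P1 \<rho> d"
    then have "v = spt (d 1) 1 \<or> v \<in> preimages \<rho> d (spt (d 1) 1)" unfolding P1_def by blast
    then show "v \<in> S.emb ` range S.wch"
    proof
      assume "v = spt (d 1) 1"
      then have "v = S.emb (S.wch 0)" using embd by simp
      then show ?thesis by blast
    next
      assume "v \<in> preimages \<rho> d (spt (d 1) 1)"
      then show ?thesis using S.novert[OF inf] embd by simp
    qed
  qed
  have "u \<in> closure (S.emb ` range S.wch)" using closure_mono[OF P1sub] u_in by blast
  then obtain s where s: "0 < snd s" "snd s < 1" "S.emb s = u" "W.cw s" using W.CL by blast
  have B: "\<not> eventually_periodic z" if z: "trajectory \<rho> d z" "z 0 = u" for z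
  proof
    assume ep: "eventually_periodic z"
    define \<zeta> where "\<zeta> = (\<lambda>n. if n = 0 then s else S.dec (z n))"
    have zst: "\<forall>n. S.st (\<zeta> n) (\<zeta> (Suc n))"
      using S.traj_dec(1)[OF z(1) s(1,2)] z(2) s(3) unfolding \<zeta>_def by simp
    have zemb: "\<forall>n. z n = S.emb (\<zeta> n) \<and> 0 < snd (\<zeta> n) \<and> snd (\<zeta> n) < 1"
      using S.traj_dec(2)[OF z(1) s(1,2)] z(2) s(3) unfolding \<zeta>_def by simp
    have sides: "Sides (z n) = {fst (\<zeta> n)}" for n using S.Sides_emb zemb by metis
    obtain m N where mN: "m \<ge> 1" "\<forall>n\<ge>N. Sides (z (n + m)) = Sides (z n)"
      using ep unfolding eventually_periodic_def by blast
    have "\<forall>n\<ge>N. fst (\<zeta> (n + m)) = fst (\<zeta> n)" using mN(2) sides by simp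
    moreover have "\<zeta> 0 = s" unfolding \<zeta>_def by simp
    ultimately show False using W.M1[OF s(4) _ zst mN(1)] by blast
  qed
  have A: "\<not> in_periodic_orbit \<rho> d u"
  proof
    assume "in_periodic_orbit \<rho> d u"
    then obtain m v k where po: "periodic_orbit \<rho> d m v" "k < m" "v k = u"
      unfolding in_periodic_orbit_def by blast
    have m: "m \<ge> 1" and pv: "\<forall>n<m. v ((n + 1) mod m) \<in> phi \<rho> d (v n)"
      using po(1) unfolding periodic_orbit_def by auto
    define z where "z t = v ((k + t) mod m)" for t
    have "z (Suc t) \<in> phi \<rho> d (z t)" for t
    proof -
      have "(k + t) mod m < m" using m by simp
      then have "v (((k + t) mod m + 1) mod m) \<in> phi \<rho> d (v ((k + t) mod m))" using pv by blast
      moreover have "((k + t) mod m + 1) mod m = (k + Suc t) mod m" by (simp add: mod_Suc_eq)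
      ultimately show ?thesis unfolding z_def by simp
    qed
    then have tr: "trajectory \<rho> d z" unfolding trajectory_def by blast
    have z0: "z 0 = u" unfolding z_def using po(2,3) by simp
    have "eventually_periodic z" unfolding eventually_periodic_def
    proof (intro exI[of _ m] exI[of _ 0] conjI allI impI)
      show "1 \<le> m" using m .
      fix n show "Sides (z (n + m)) = Sides (z n)" unfolding z_def by (simp add: add.assoc[symmetric])
    qed
    then show False using B[OF tr z0] by simp
  qed
  show ?thesis using A B by blast
qed


end
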